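(* $C_X(\mathcal{A})^*=\operatorname{cl}\{\exp y:\ y\in\mathbb{R}^{\mathcal{A}},\ (y,1)\in G_X(\mathcal{A})^*\}$, where $\exp$ is applied entrywise, $C_X(\mathcal{A})^*\subset\mathbb{R}^{\mathcal{A}}$ and $G_X(\mathcal{A})^*\subset\mathbb{R}^{\mathcal{A}}\times\mathbb{R}$ are dual cones with respect to standard inner products.
   Context: $X\subset\mathbb{R}^n$ is a nonempty closed convex set and $\mathcal{A}\subset\mathbb{R}^n$ is a nonempty finite set such that the functions $x\mapsto\exp(\alpha^Tx)$, $\alpha\in\mathcal{A}$, are linearly independent on $X$. $\mathbb{R}^{\mathcal{A}}$ denotes real vectors indexed by $\mathcal{A}$. $\mathcal{A}\nu=\sum_\alpha\alpha\nu_\alpha$. $\sigma_X(y)=\sup\{y^Tx:x\in X\}$. $N_\beta=\{\nu\in\mathbb{R}^{\mathcal{A}}:\nu_\alpha\ge0\ \forall\alpha\neq\beta,\ \sum_\alpha\nu_\alpha=0\}$. A vector $\nu^\star\in N_\beta$ is an $X$-circuit of $\mathcal{A}$ if (1) $\nu^\star\neq0$, (2) $\sigma_X(-\mathcal{A}\nu^\star)<\infty$, and (3) $\nu^\star$ cannot be written as a convex combination of two non-proportional vectors $\nu^{(1)},\nu^{(2)}\in N_\beta$ such that the map $\nu\mapsto\sigma_X(-\mathcal{A}\nu)$ is affine on the segment $[\nu^{(1)},\nu^{(2)}]$. $\Lambda_X(\mathcal{A})$ is the set of all $X$-circuits $\lambda$ (over all $\beta\in\mathcal{A}$) normalized so that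 the unique negative entry equals $-1$. Signomials $f=\sum_\alpha c_\alpha\mathrm{e}^\alpha$, $\mathrm{e}^\alpha(x)=\exp(\alpha^Tx)$, are identified with $c\in\mathbb{R}^{\mathcal{A}}$; $C_X(\mathcal{A},\beta)$ is the set of $c$ with $f$ nonnegative on $X$ and $c_\alpha\ge0$ for $\alpha\ne\beta$, and $C_X(\mathcal{A})=\sum_{\beta\in\mathcal{A}}C_X(\mathcal{A},\beta)$. The functional form of $\lambda\in\Lambda_X(\mathcal{A})$ is $\phi_\lambda=(\lambda,\sigma_X(-\mathcal{A}\lambda))\in\mathbb{R}^{\mathcal{A}}\times\mathbb{R}$, i.e. $\phi_\lambda(y)=(y,1)^T\phi_\lambda=\sum_\alpha y_\alpha\lambda_\alpha+\sigma_X(-\mathcal{A}\lambda)$. The circuit graph is $G_X(\mathcal{A})=\operatorname{cone}(\{\phi_\lambda:\lambda\in\Lambda_X(\mathcal{A})\}\cup\{(0,1)\})\subset\mathbb{R}^{\mathcal{A}}\times\mathbb{R}$ (the convex conic hull, including the origin). *)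

theory Defs
  imports "HOL-Analysis.Analysis"
begin

text \<open>Vectors in R^A are represented as functions 'a => real vanishing outside A.\<close>

definition RA :: "'a set \<Rightarrow> ('a \<Rightarrow> real) set" where
  "RA A = {c. \<forall>\<alpha>. \<alpha> \<notin> A \<longrightarrow> c \<alpha> = 0}"

definition Amul :: "'a::euclidean_space set \<Rightarrow> ('a \<Rightarrow> real) \<Rightarrow> 'a" where
  "Amul A \<nu> = (\<Sum>\<alpha>\<in>A. \<nu> \<alpha> *\<^sub>R \<alpha>)"

definition supp_fun :: "'a::euclidean_space set \<Rightarrow> 'a \<Rightarrow> ereal" where
  "supp_fun X y = (SUP x\<in>X. ereal (y \<bullet> x))"

definition Nbeta :: "'a set \<Rightarrow> 'a \<Rightarrow> ('a \<Rightarrow> real) set" where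
  "Nbeta A \<beta> = {\<nu> \<in> RA A. (\<forall>\<alpha>\<in>A. \<alpha> \<noteq> \<beta> \<longrightarrow> \<nu> \<alpha> \<ge> 0) \<and> (\<Sum>\<alpha>\<in>A. \<nu> \<alpha>) = 0}"

definition proportional :: "('a \<Rightarrow> real) \<Rightarrow> ('a \<Rightarrow> real) \<Rightarrow> bool" where
  "proportional u v \<longleftrightarrow> (\<exists>t::real. u = (\<lambda>\<alpha>. t * v \<alpha>)) \<or> (\<exists>t::real. v = (\<lambda>\<alpha>. t * u \<alpha>))"

definition affine_on_segment :: "'a::euclidean_space set \<Rightarrow> 'a set \<Rightarrow> ('a \<Rightarrow> real) \<Rightarrow> ('a \<Rightarrow> real) \<Rightarrow> bool" where
  "affine_on_segment X A u v \<longleftrightarrow>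
     (\<exists>a b::real. \<forall>t\<in>{0..1}.
        supp_fun X (- Amul A (\<lambda>\<alpha>. (1 - t) * u \<alpha> + t * v \<alpha>)) = ereal (a + b * t))"

definition X_circuit :: "'a::euclidean_space set \<Rightarrow> 'a set \<Rightarrow> 'a \<Rightarrow> ('a \<Rightarrow> real) \<Rightarrow> bool" where
  "X_circuit X A \<beta> \<nu> \<longleftrightarrow>
     \<nu> \<in> Nbeta A \<beta> \<and> \<nu> \<noteq> (\<lambda>_. 0) \<and> supp_fun X (- Amul A \<nu>) < \<infinity> \<and>
     \<not> (\<exists>\<nu>1 \<in> Nbeta A \<beta>. \<exists>\<nu>2 \<in> Nbeta A \<beta>. \<exists>\<theta>::real. 0 < \<theta> \<and> \<theta> < 1 \<and>
          \<nu> = (\<lambda>\<alpha>. \<theta> * \<nu>1 \<alpha> + (1 - \<theta>) * \<nu>2 \<alpha>) \<and>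
          \<not> proportional \<nu>1 \<nu>2 \<and> affine_on_segment X A \<nu>1 \<nu>2)"

definition Lambda_X :: "'a::euclidean_space set \<Rightarrow> 'a set \<Rightarrow> ('a \<Rightarrow> real) set" where
  "Lambda_X X A = {l. \<exists>\<beta>\<in>A. X_circuit X A \<beta> l \<and> l \<beta> = -1}"

definition phi :: "'a::euclidean_space set \<Rightarrow> 'a set \<Rightarrow> ('a \<Rightarrow> real) \<Rightarrow> ('a \<Rightarrow> real) \<times> real" where
  "phi X A l = (l, real_of_ereal (supp_fun X (- Amul A l)))"

text \<open>circuit graph: convex conic hull of the phi_lambda and (0,1), including the origin\<close>
definition circuit_graph :: "'a::euclidean_space set \<Rightarrow> 'a set \<Rightarrow> (('a \<Rightarrow> real) \<times> real) set" where
  "circuit_graph X A =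
     {p. \<exists>F c t. finite F \<and> F \<subseteq> Lambda_X X A \<and> (\<forall>l\<in>F. c l \<ge> (0::real)) \<and> t \<ge> (0::real) \<and>
          p = (\<lambda>\<alpha>. \<Sum>l\<in>F. c l * fst (phi X A l) \<alpha>, (\<Sum>l\<in>F. c l * snd (phi X A l)) + t)}"

definition circuit_graph_dual :: "'a::euclidean_space set \<Rightarrow> 'a set \<Rightarrow> (('a \<Rightarrow> real) \<times> real) set" where
  "circuit_graph_dual X A =
     {(y, s). y \<in> RA A \<and> (\<forall>(u, r)\<in>circuit_graph X A. (\<Sum>\<alpha>\<in>A. y \<alpha> * u \<alpha>) + s * r \<ge> 0)}"

definition signomial :: "'a::euclidean_space set \<Rightarrow> ('a \<Rightarrow> real) \<Rightarrow> 'a \<Rightarrow> real" where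
  "signomial A c x = (\<Sum>\<alpha>\<in>A. c \<alpha> * exp (\<alpha> \<bullet> x))"

definition SAGE_beta :: "'a::euclidean_space set \<Rightarrow> 'a set \<Rightarrow> 'a \<Rightarrow> ('a \<Rightarrow> real) set" where
  "SAGE_beta X A \<beta> = {c \<in> RA A. (\<forall>x\<in>X. signomial A c x \<ge> 0) \<and> (\<forall>\<alpha>\<in>A. \<alpha> \<noteq> \<beta> \<longrightarrow> c \<alpha> \<ge> 0)}"

definition SAGE :: "'a::euclidean_space set \<Rightarrow> 'a set \<Rightarrow> ('a \<Rightarrow> real) set" where
  "SAGE X A = {c. \<exists>f. (\<forall>\<beta>\<in>A. f \<beta> \<in> SAGE_beta X A \<beta>) \<and> c = (\<lambda>\<alpha>. \<Sum>\<beta>\<in>A. f \<beta> \<alpha>)}"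

definition SAGE_dual :: "'a::euclidean_space set \<Rightarrow> 'a set \<Rightarrow> ('a \<Rightarrow> real) set" where
  "SAGE_dual X A = {v \<in> RA A. \<forall>c\<in>SAGE X A. (\<Sum>\<alpha>\<in>A. v \<alpha> * c \<alpha>) \<ge> 0}"

definition exp_vec :: "'a set \<Rightarrow> ('a \<Rightarrow> real) \<Rightarrow> ('a \<Rightarrow> real)" where
  "exp_vec A y = (\<lambda>\<alpha>. if \<alpha> \<in> A then exp (y \<alpha>) else 0)"

end

theory Submission
  imports Defs
begin


lemma subseq_fin:
  fixes f :: "nat \<Rightarrow> 'b \<Rightarrow> real"
  assumes "finite S" "\<And>n \<alpha>. \<alpha> \<in> S \<Longrightarrow> \<bar>f n \<alpha>\<bar> \<le> B"
  shows "\<exists>r L. strict_mono r \<and> (\<forall>\<alpha>\<in>S. (\<lambda>n. f (r n) \<alpha>) \<longlonglongrightarrow> L \<alpha>)"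
  using assms
proof (induction S rule: finite_induct)
  case empty
  show ?case by (rule exI[of _ id]) (auto simp: strict_mono_def)
next
  case (insert a S)
  then obtain r L where r: "strict_mono r" and L: "\<forall>\<alpha>\<in>S. (\<lambda>n. f (r n) \<alpha>) \<longlonglongrightarrow> L \<alpha>"
    by blast
  obtain r2 where r2: "strict_mono r2" and m: "monoseq (\<lambda>n. f (r (r2 n)) a)"
    using seq_monosub[of "\<lambda>n. f (r n) a"] by blast
  have "Bseq (\<lambda>n. f (r (r2 n)) a)"
    by (rule BseqI'[of _ B]) (use insert.prems in auto)
  then have "convergent (\<lambda>n. f (r (r2 n)) a)" using m Bseq_monoseq_convergent by blast
  then obtain la where la: "(\<lambda>n. f (r (r2 n)) a) \<longlonglongrightarrow> la" by (auto simp: convergent_def)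
  have "\<forall>\<alpha>\<in>insert a S. (\<lambda>n. f ((r \<circ> r2) n) \<alpha>) \<longlonglongrightarrow> (L(a := la)) \<alpha>"
  proof
    fix \<alpha> assume "\<alpha> \<in> insert a S"
    then show "(\<lambda>n. f ((r \<circ> r2) n) \<alpha>) \<longlonglongrightarrow> (L(a := la)) \<alpha>"
    proof
      assume "\<alpha> = a" then show ?thesis using la by simp
    next
      assume "\<alpha> \<in> S"
      then have "((\<lambda>n. f (r n) \<alpha>) \<circ> r2) \<longlonglongrightarrow> L \<alpha>" using L r2 LIMSEQ_subseq_LIMSEQ by blast
      then show ?thesis using \<open>\<alpha> \<in> S\<close> insert.hyps by (auto simp: o_def)
    qed
  qed
  moreover have "strict_mono (r \<circ> r2)" using r r2 strict_mono_o by blast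
  ultimately show ?case by blast
qed

lemma supp_fun_scale:
  assumes "X \<noteq> {}" "0 \<le> t"
  shows "supp_fun X (t *\<^sub>R v) = ereal t * supp_fun X v"
  unfolding supp_fun_def using Sup_ereal_mult_left'[OF assms]
  by (simp add: inner_scaleR_left)

lemma supp_fun_ge: "x \<in> X \<Longrightarrow> ereal (v \<bullet> x) \<le> supp_fun X v"
  unfolding supp_fun_def by (rule SUP_upper)

lemma supp_fun_le: "(\<And>x. x \<in> X \<Longrightarrow> v \<bullet> x \<le> r) \<Longrightarrow> supp_fun X v \<le> ereal r"
  unfolding supp_fun_def by (rule SUP_least) auto

lemma Amul_comb: "Amul A (\<lambda>\<alpha>. a * u \<alpha> + b * v \<alpha>) = a *\<^sub>R Amul A u + b *\<^sub>R Amul A v"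
  unfolding Amul_def by (simp add: scaleR_add_left sum.distrib scaleR_sum_right)

lemma Amul_scale: "Amul A (\<lambda>\<alpha>. t * u \<alpha>) = t *\<^sub>R Amul A u"
  unfolding Amul_def by (simp add: scaleR_sum_right)

lemma Amul_inner: "(- Amul A \<nu>) \<bullet> x = - (\<Sum>\<alpha>\<in>A. \<nu> \<alpha> * (\<alpha> \<bullet> x))"
  unfolding Amul_def by (simp add: inner_sum_left)


definition sig :: "'a::euclidean_space set \<Rightarrow> 'a set \<Rightarrow> ('a \<Rightarrow> real) \<Rightarrow> ereal" where
  "sig X A \<nu> = supp_fun X (- Amul A \<nu>)"

definition slice :: "'a set \<Rightarrow> 'a \<Rightarrow> ('a \<Rightarrow> real) set" where
  "slice A \<beta> = {\<nu> \<in> Nbeta A \<beta>. \<nu> \<beta> = -1}"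

definition psi :: "'a::euclidean_space set \<Rightarrow> 'a set \<Rightarrow> ('a \<Rightarrow> real) \<Rightarrow> ('a \<Rightarrow> real) \<Rightarrow> real" where
  "psi X A y \<nu> = (\<Sum>\<alpha>\<in>A. y \<alpha> * \<nu> \<alpha>) + real_of_ereal (sig X A \<nu>)"

lemma Amul_inner2: "Amul A \<nu> \<bullet> x = (\<Sum>\<alpha>\<in>A. \<nu> \<alpha> * (\<alpha> \<bullet> x))"
  unfolding Amul_def by (simp add: inner_sum_left)

lemma sig_ge: "x \<in> X \<Longrightarrow> ereal (- (\<Sum>\<alpha>\<in>A. \<nu> \<alpha> * (\<alpha> \<bullet> x))) \<le> sig X A \<nu>"
  unfolding sig_def using supp_fun_ge[of x X "- Amul A \<nu>"] by (simp add: Amul_inner2)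

lemma sig_le: "(\<And>x. x \<in> X \<Longrightarrow> - (\<Sum>\<alpha>\<in>A. \<nu> \<alpha> * (\<alpha> \<bullet> x)) \<le> r) \<Longrightarrow> sig X A \<nu> \<le> ereal r"
  unfolding sig_def by (rule supp_fun_le) (simp add: Amul_inner2)

lemma sig_finite: "X \<noteq> {} \<Longrightarrow> sig X A \<nu> < \<infinity> \<Longrightarrow> sig X A \<nu> = ereal (real_of_ereal (sig X A \<nu>))"
proof -
  assume "X \<noteq> {}" "sig X A \<nu> < \<infinity>"
  then obtain x where "x \<in> X" by auto
  from sig_ge[OF this, of \<nu> A] have "sig X A \<nu> \<noteq> -\<infinity>" by auto
  with \<open>sig X A \<nu> < \<infinity>\<close> show ?thesis by (cases "sig X A \<nu>") auto
qed

lemma sig_scale: "X \<noteq> {} \<Longrightarrow> 0 \<le> t \<Longrightarrow> sig X A (\<lambda>\<alpha>. t * \<nu> \<alpha>) = ereal t * sig X A \<nu>"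
  unfolding sig_def Amul_scale using supp_fun_scale[of X t "- Amul A \<nu>"] by simp

lemma sig_zero: "X \<noteq> {} \<Longrightarrow> sig X A (\<lambda>_. 0) = 0"
  unfolding sig_def supp_fun_def Amul_def by (simp add: zero_ereal_def)

lemma Nbeta_le: "\<nu> \<in> Nbeta A \<beta> \<Longrightarrow> finite A \<Longrightarrow> \<beta> \<in> A \<Longrightarrow> \<nu> \<beta> = - (\<Sum>\<alpha>\<in>A-{\<beta>}. \<nu> \<alpha>)"
  unfolding Nbeta_def using sum.remove[of A \<beta> \<nu>] by auto

lemma Nbeta_neg: assumes "\<nu> \<in> Nbeta A \<beta>" "finite A" "\<beta> \<in> A" "\<nu> \<noteq> (\<lambda>_. 0)"
  shows "\<nu> \<beta> < 0"
proof (rule ccontr)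
  assume "\<not> \<nu> \<beta> < 0"
  have nn: "\<forall>\<alpha>\<in>A-{\<beta>}. 0 \<le> \<nu> \<alpha>" using assms(1) unfolding Nbeta_def by auto
  have "(\<Sum>\<alpha>\<in>A-{\<beta>}. \<nu> \<alpha>) = 0" using Nbeta_le[OF assms(1-3)] \<open>\<not> \<nu> \<beta> < 0\<close>
    using sum_nonneg[of "A-{\<beta>}" \<nu>] nn by force
  then have z: "\<forall>\<alpha>\<in>A-{\<beta>}. \<nu> \<alpha> = 0" using sum_nonneg_eq_0_iff[of "A-{\<beta>}" \<nu>] nn assms(2) by auto
  then have "\<nu> \<beta> = 0" using Nbeta_le[OF assms(1-3)] by simp
  with z have "\<nu> = (\<lambda>_. 0)" using assms(1) unfolding Nbeta_def RA_def by (auto intro!: ext)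
  with assms(4) show False by simp
qed

lemma slice_bound: assumes "\<nu> \<in> slice A \<beta>" "finite A" "\<beta> \<in> A" "\<alpha> \<in> A" shows "\<bar>\<nu> \<alpha>\<bar> \<le> 1"
proof (cases "\<alpha> = \<beta>")
  case True then show ?thesis using assms unfolding slice_def by auto
next
  case False
  have nb: "\<nu> \<in> Nbeta A \<beta>" and m1: "\<nu> \<beta> = -1" using assms(1) unfolding slice_def by auto
  have nn: "\<forall>\<alpha>\<in>A-{\<beta>}. 0 \<le> \<nu> \<alpha>" using nb unfolding Nbeta_def by auto
  have s: "(\<Sum>\<alpha>\<in>A-{\<beta>}. \<nu> \<alpha>) = 1" using Nbeta_le[OF nb assms(2,3)] m1 by simp
  have "\<nu> \<alpha> \<le> (\<Sum>\<alpha>\<in>A-{\<beta>}. \<nu> \<alpha>)"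
    using member_le_sum[of \<alpha> "A-{\<beta>}" \<nu>] nn False assms(2,4) by auto
  then show ?thesis using s nn False assms(4) by auto
qed


lemma lim_slice:
  assumes X: "X \<noteq> {}" and fA: "finite A" and b: "\<beta> \<in> A"
    and g: "\<And>n. g n \<in> slice A \<beta> \<and> sig X A (g n) < \<infinity> \<and> psi X A y (g n) \<le> m + e n"
    and e: "e \<longlonglongrightarrow> 0"
    and L: "\<And>\<alpha>. \<alpha> \<in> A \<Longrightarrow> (\<lambda>n. g n \<alpha>) \<longlonglongrightarrow> L \<alpha>"
  shows "(\<lambda>\<alpha>. if \<alpha> \<in> A then L \<alpha> else 0) \<in> slice A \<beta> \<and>
         sig X A (\<lambda>\<alpha>. if \<alpha> \<in> A then L \<alpha> else 0) < \<infinity> \<and>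
         psi X A y (\<lambda>\<alpha>. if \<alpha> \<in> A then L \<alpha> else 0) \<le> m"
proof -
  define \<nu> where "\<nu> = (\<lambda>\<alpha>. if \<alpha> \<in> A then L \<alpha> else 0)"
  have gs: "g n \<in> Nbeta A \<beta>" "g n \<beta> = -1" for n using g[of n] unfolding slice_def by auto
  have "(\<lambda>n. g n \<beta>) \<longlonglongrightarrow> -1" using gs(2) by simp
  then have Lb: "L \<beta> = -1" using L[OF b] LIMSEQ_unique by blast
  have Lnn: "0 \<le> L \<alpha>" if "\<alpha> \<in> A" "\<alpha> \<noteq> \<beta>" for \<alpha>
    using L[OF that(1)] by (rule LIMSEQ_le_const) (use gs(1) that in \<open>auto simp: Nbeta_def\<close>)
  have "(\<lambda>n. \<Sum>\<alpha>\<in>A. g n \<alpha>) \<longlonglongrightarrow> (\<Sum>\<alpha>\<in>A. L \<alpha>)" by (rule tendsto_sum) (use L in auto)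
  moreover have "(\<lambda>n. \<Sum>\<alpha>\<in>A. g n \<alpha>) = (\<lambda>n. 0)" using gs(1) by (auto simp: Nbeta_def)
  ultimately have Ls: "(\<Sum>\<alpha>\<in>A. L \<alpha>) = 0" using LIMSEQ_unique tendsto_const by metis
  have nu_sl: "\<nu> \<in> slice A \<beta>"
    unfolding slice_def Nbeta_def RA_def \<nu>_def using Lb Lnn Ls b by auto
  have key: "(\<Sum>\<alpha>\<in>A. y \<alpha> * \<nu> \<alpha>) - (\<Sum>\<alpha>\<in>A. \<nu> \<alpha> * (\<alpha> \<bullet> x)) \<le> m" if x: "x \<in> X" for x
  proof -
    have T1: "(\<lambda>n. (\<Sum>\<alpha>\<in>A. y \<alpha> * g n \<alpha>) - (\<Sum>\<alpha>\<in>A. g n \<alpha> * (\<alpha> \<bullet> x)))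
          \<longlonglongrightarrow> (\<Sum>\<alpha>\<in>A. y \<alpha> * L \<alpha>) - (\<Sum>\<alpha>\<in>A. L \<alpha> * (\<alpha> \<bullet> x))"
      by (intro tendsto_intros tendsto_sum) (use L in auto)
    moreover have T2: "(\<lambda>n. m + e n) \<longlonglongrightarrow> m + 0" by (intro tendsto_intros e)
    moreover have T3: "(\<Sum>\<alpha>\<in>A. y \<alpha> * g n \<alpha>) - (\<Sum>\<alpha>\<in>A. g n \<alpha> * (\<alpha> \<bullet> x)) \<le> m + e n" for n
    proof -
      have "ereal (- (\<Sum>\<alpha>\<in>A. g n \<alpha> * (\<alpha> \<bullet> x))) \<le> sig X A (g n)" by (rule sig_ge[OF x])
      also have "\<dots> = ereal (real_of_ereal (sig X A (g n)))" using sig_finite[OF X] g by blast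
      finally have "- (\<Sum>\<alpha>\<in>A. g n \<alpha> * (\<alpha> \<bullet> x)) \<le> real_of_ereal (sig X A (g n))" by simp
      then show ?thesis using g[of n] unfolding psi_def by linarith
    qed
    have "(\<Sum>\<alpha>\<in>A. y \<alpha> * L \<alpha>) - (\<Sum>\<alpha>\<in>A. L \<alpha> * (\<alpha> \<bullet> x)) \<le> m + 0"
      apply (rule LIMSEQ_le[OF T1 T2]) using T3 by blast
    moreover have "(\<Sum>\<alpha>\<in>A. y \<alpha> * \<nu> \<alpha>) = (\<Sum>\<alpha>\<in>A. y \<alpha> * L \<alpha>)"
      "(\<Sum>\<alpha>\<in>A. \<nu> \<alpha> * (\<alpha> \<bullet> x)) = (\<Sum>\<alpha>\<in>A. L \<alpha> * (\<alpha> \<bullet> x))"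
      by (auto simp: \<nu>_def intro!: sum.cong)
    ultimately show ?thesis by simp
  qed
  have sl: "sig X A \<nu> \<le> ereal (m - (\<Sum>\<alpha>\<in>A. y \<alpha> * \<nu> \<alpha>))"
  proof (rule sig_le)
    fix x assume "x \<in> X"
    from key[OF this] show "- (\<Sum>\<alpha>\<in>A. \<nu> \<alpha> * (\<alpha> \<bullet> x)) \<le> m - (\<Sum>\<alpha>\<in>A. y \<alpha> * \<nu> \<alpha>)" by linarith
  qed
  then have fin: "sig X A \<nu> < \<infinity>" using order.strict_trans1[OF sl, of \<infinity>] by simp
  have "real_of_ereal (sig X A \<nu>) \<le> m - (\<Sum>\<alpha>\<in>A. y \<alpha> * \<nu> \<alpha>)"
    using sl sig_finite[OF X fin] by (metis ereal_less_eq(3))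
  then have "psi X A y \<nu> \<le> m" unfolding psi_def by simp
  with nu_sl fin show ?thesis unfolding \<nu>_def by simp
qed


lemma normalize_slice:
  assumes "\<nu> \<in> Nbeta A \<beta>" "\<nu> \<beta> < 0"
  shows "(\<lambda>\<alpha>. (1 / (- \<nu> \<beta>)) * \<nu> \<alpha>) \<in> slice A \<beta>"
proof -
  have "(\<Sum>\<alpha>\<in>A. (1 / (- \<nu> \<beta>)) * \<nu> \<alpha>) = (1 / (- \<nu> \<beta>)) * (\<Sum>\<alpha>\<in>A. \<nu> \<alpha>)"
    by (simp add: sum_distrib_left)
  then show ?thesis using assms unfolding slice_def Nbeta_def RA_def
    by (auto simp: divide_simps)
qed

lemma sum_scale_y: fixes y \<nu> :: "'a \<Rightarrow> real" shows "(\<Sum>\<alpha>\<in>A. y \<alpha> * (c * \<nu> \<alpha>)) = c * (\<Sum>\<alpha>\<in>A. y \<alpha> * \<nu> \<alpha>)"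
  by (simp add: sum_distrib_left mult.left_commute)

lemma psi_bdd:
  assumes X: "X \<noteq> {}" and fA: "finite A" and b: "\<beta> \<in> A"
  shows "\<exists>C. \<forall>\<mu>. \<mu> \<in> slice A \<beta> \<and> sig X A \<mu> < \<infinity> \<longrightarrow> - C \<le> psi X A y \<mu>"
proof -
  obtain x0 where x0: "x0 \<in> X" using X by auto
  define C where "C = (\<Sum>\<alpha>\<in>A. \<bar>y \<alpha>\<bar>) + (\<Sum>\<alpha>\<in>A. \<bar>\<alpha> \<bullet> x0\<bar>)"
  have "- C \<le> psi X A y \<mu>" if \<mu>: "\<mu> \<in> slice A \<beta>" "sig X A \<mu> < \<infinity>" for \<mu>
  proof -
    have bd: "\<bar>\<mu> \<alpha>\<bar> \<le> 1" if "\<alpha> \<in> A" for \<alpha> using slice_bound[OF \<mu>(1) fA b that] .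
    have t1: "- \<bar>y \<alpha>\<bar> \<le> y \<alpha> * \<mu> \<alpha>" if "\<alpha> \<in> A" for \<alpha>
    proof -
      have "\<bar>y \<alpha> * \<mu> \<alpha>\<bar> \<le> \<bar>y \<alpha>\<bar> * 1" unfolding abs_mult
        by (rule mult_left_mono) (use bd[OF that] in auto)
      then show ?thesis by linarith
    qed
    have t2: "\<mu> \<alpha> * (\<alpha> \<bullet> x0) \<le> \<bar>\<alpha> \<bullet> x0\<bar>" if "\<alpha> \<in> A" for \<alpha>
    proof -
      have "\<bar>\<mu> \<alpha> * (\<alpha> \<bullet> x0)\<bar> \<le> 1 * \<bar>\<alpha> \<bullet> x0\<bar>" unfolding abs_mult
        by (rule mult_right_mono) (use bd[OF that] in auto)
      then show ?thesis by linarith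
    qed
    have s1: "- (\<Sum>\<alpha>\<in>A. \<bar>y \<alpha>\<bar>) \<le> (\<Sum>\<alpha>\<in>A. y \<alpha> * \<mu> \<alpha>)"
      using sum_mono[of A "\<lambda>\<alpha>. - \<bar>y \<alpha>\<bar>", OF t1] by (simp add: sum_negf)
    have s2: "(\<Sum>\<alpha>\<in>A. \<mu> \<alpha> * (\<alpha> \<bullet> x0)) \<le> (\<Sum>\<alpha>\<in>A. \<bar>\<alpha> \<bullet> x0\<bar>)"
      using sum_mono[of A "\<lambda>\<alpha>. \<mu> \<alpha> * (\<alpha> \<bullet> x0)", OF t2] by simp
    have "ereal (- (\<Sum>\<alpha>\<in>A. \<mu> \<alpha> * (\<alpha> \<bullet> x0))) \<le> ereal (real_of_ereal (sig X A \<mu>))"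
      using sig_ge[OF x0, of \<mu> A] sig_finite[OF X \<mu>(2)] by simp
    then have "- (\<Sum>\<alpha>\<in>A. \<mu> \<alpha> * (\<alpha> \<bullet> x0)) \<le> real_of_ereal (sig X A \<mu>)" by simp
    then show ?thesis using s1 s2 unfolding psi_def C_def by linarith
  qed
  then show ?thesis by blast
qed


lemma extreme_is_circuit:
  assumes X: "X \<noteq> {}" and fA: "finite A" and b: "\<beta> \<in> A"
    and mlow: "\<And>\<mu>. \<mu> \<in> slice A \<beta> \<Longrightarrow> sig X A \<mu> < \<infinity> \<Longrightarrow> m \<le> psi X A y \<mu>"
    and e0: "e0 \<in> slice A \<beta>" "sig X A e0 < \<infinity>" "psi X A y e0 \<le> m"
    and Qmax: "\<And>\<mu>. \<mu> \<in> slice A \<beta> \<Longrightarrow> sig X A \<mu> < \<infinity> \<Longrightarrow> psi X A y \<mu> \<le> m \<Longrightarrow>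
                 (\<Sum>\<alpha>\<in>A. (\<mu> \<alpha>)\<^sup>2) \<le> (\<Sum>\<alpha>\<in>A. (e0 \<alpha>)\<^sup>2)"
  shows "X_circuit X A \<beta> e0"
proof -
  have e0N: "e0 \<in> Nbeta A \<beta>" and e0b: "e0 \<beta> = -1" using e0(1) unfolding slice_def by auto
  have "e0 \<noteq> (\<lambda>_. 0)" using e0b by (metis zero_neq_neg_one)
  moreover have "\<not> (\<exists>\<nu>1 \<in> Nbeta A \<beta>. \<exists>\<nu>2 \<in> Nbeta A \<beta>. \<exists>\<theta>::real. 0 < \<theta> \<and> \<theta> < 1 \<and>
          e0 = (\<lambda>\<alpha>. \<theta> * \<nu>1 \<alpha> + (1 - \<theta>) * \<nu>2 \<alpha>) \<and>
          \<not> proportional \<nu>1 \<nu>2 \<and> affine_on_segment X A \<nu>1 \<nu>2)"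
  proof
    assume "\<exists>\<nu>1 \<in> Nbeta A \<beta>. \<exists>\<nu>2 \<in> Nbeta A \<beta>. \<exists>\<theta>::real. 0 < \<theta> \<and> \<theta> < 1 \<and>
          e0 = (\<lambda>\<alpha>. \<theta> * \<nu>1 \<alpha> + (1 - \<theta>) * \<nu>2 \<alpha>) \<and>
          \<not> proportional \<nu>1 \<nu>2 \<and> affine_on_segment X A \<nu>1 \<nu>2"
    then obtain \<nu>1 \<nu>2 \<theta> where n1: "\<nu>1 \<in> Nbeta A \<beta>" and n2: "\<nu>2 \<in> Nbeta A \<beta>"
      and th: "0 < \<theta>" "\<theta> < 1" and e0eq: "e0 = (\<lambda>\<alpha>. \<theta> * \<nu>1 \<alpha> + (1 - \<theta>) * \<nu>2 \<alpha>)"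
      and np: "\<not> proportional \<nu>1 \<nu>2" and aff: "affine_on_segment X A \<nu>1 \<nu>2" by blast
    obtain a bb where ab: "\<And>t. t \<in> {0..1} \<Longrightarrow> sig X A (\<lambda>\<alpha>. (1 - t) * \<nu>1 \<alpha> + t * \<nu>2 \<alpha>) = ereal (a + bb * t)"
      using aff unfolding affine_on_segment_def sig_def by blast
    have sig1: "sig X A \<nu>1 = ereal a" using ab[of 0] by simp
    have sig2: "sig X A \<nu>2 = ereal (a + bb)" using ab[of 1] by simp
    have "(\<lambda>\<alpha>. (1 - (1 - \<theta>)) * \<nu>1 \<alpha> + (1 - \<theta>) * \<nu>2 \<alpha>) = e0" using e0eq by simp
    then have sige: "sig X A e0 = ereal (a + bb * (1 - \<theta>))" using ab[of "1 - \<theta>"] th by simp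
    have "\<nu>1 \<noteq> (\<lambda>_. 0)"
    proof
      assume "\<nu>1 = (\<lambda>_. 0)"
      then have "\<nu>1 = (\<lambda>\<alpha>. 0 * \<nu>2 \<alpha>)" by simp
      with np show False unfolding proportional_def by blast
    qed
    then have neg1: "\<nu>1 \<beta> < 0" using Nbeta_neg[OF n1 fA b] by blast
    have "\<nu>2 \<noteq> (\<lambda>_. 0)"
    proof
      assume "\<nu>2 = (\<lambda>_. 0)"
      then have "\<nu>2 = (\<lambda>\<alpha>. 0 * \<nu>1 \<alpha>)" by simp
      with np show False unfolding proportional_def by blast
    qed
    then have neg2: "\<nu>2 \<beta> < 0" using Nbeta_neg[OF n2 fA b] by blast
    define s1 where "s1 = - \<nu>1 \<beta>"
    define s2 where "s2 = - \<nu>2 \<beta>"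
    have s1p: "s1 > 0" and s2p: "s2 > 0" using neg1 neg2 unfolding s1_def s2_def by auto
    define \<mu>1 where "\<mu>1 = (\<lambda>\<alpha>. (1 / s1) * \<nu>1 \<alpha>)"
    define \<mu>2 where "\<mu>2 = (\<lambda>\<alpha>. (1 / s2) * \<nu>2 \<alpha>)"
    have m1s: "\<mu>1 \<in> slice A \<beta>" unfolding \<mu>1_def s1_def by (rule normalize_slice[OF n1 neg1])
    have m2s: "\<mu>2 \<in> slice A \<beta>" unfolding \<mu>2_def s2_def by (rule normalize_slice[OF n2 neg2])
    have sm1: "sig X A \<mu>1 = ereal (a / s1)" unfolding \<mu>1_def
      using sig_scale[OF X, of "1/s1" A \<nu>1] s1p sig1 by simp
    have sm2: "sig X A \<mu>2 = ereal ((a + bb) / s2)" unfolding \<mu>2_def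
      using sig_scale[OF X, of "1/s2" A \<nu>2] s2p sig2 by simp
    have pm1: "s1 * psi X A y \<mu>1 = (\<Sum>\<alpha>\<in>A. y \<alpha> * \<nu>1 \<alpha>) + a"
      unfolding psi_def sm1 using s1p by (simp add: \<mu>1_def sum_scale_y distrib_left sum_divide_distrib[symmetric])
    have pm2: "s2 * psi X A y \<mu>2 = (\<Sum>\<alpha>\<in>A. y \<alpha> * \<nu>2 \<alpha>) + (a + bb)"
      unfolding psi_def sm2 using s2p by (simp add: \<mu>2_def sum_scale_y distrib_left sum_divide_distrib[symmetric] add_divide_distrib)
    have "(\<Sum>\<alpha>\<in>A. y \<alpha> * e0 \<alpha>) = \<theta> * (\<Sum>\<alpha>\<in>A. y \<alpha> * \<nu>1 \<alpha>) + (1 - \<theta>) * (\<Sum>\<alpha>\<in>A. y \<alpha> * \<nu>2 \<alpha>)"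
      unfolding e0eq by (simp add: distrib_left sum.distrib sum_scale_y[symmetric] mult.left_commute)
    moreover have "psi X A y e0 = (\<Sum>\<alpha>\<in>A. y \<alpha> * e0 \<alpha>) + (a + bb * (1 - \<theta>))"
      unfolding psi_def sige by simp
    ultimately have "psi X A y e0 = \<theta> * ((\<Sum>\<alpha>\<in>A. y \<alpha> * \<nu>1 \<alpha>) + a) + (1 - \<theta>) * ((\<Sum>\<alpha>\<in>A. y \<alpha> * \<nu>2 \<alpha>) + (a + bb))"
      by (simp add: algebra_simps)
    then have pe: "psi X A y e0 = \<theta> * (s1 * psi X A y \<mu>1) + (1 - \<theta>) * (s2 * psi X A y \<mu>2)"
      unfolding pm1 pm2 .
    have kap: "\<theta> * s1 + (1 - \<theta>) * s2 = 1" using e0b unfolding e0eq s1_def s2_def by simp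
    define \<kappa> where "\<kappa> = \<theta> * s1"
    have "0 < (1 - \<theta>) * s2" using th s2p by simp
    then have kp: "0 < \<kappa>" "0 < 1 - \<kappa>" using th s1p kap unfolding \<kappa>_def by auto
    have k2: "1 - \<kappa> = (1 - \<theta>) * s2" using kap unfolding \<kappa>_def by simp
    have pe2: "psi X A y e0 = \<kappa> * psi X A y \<mu>1 + (1 - \<kappa>) * psi X A y \<mu>2"
    proof -
      have "psi X A y e0 = \<kappa> * psi X A y \<mu>1 + ((1 - \<theta>) * s2) * psi X A y \<mu>2"
        unfolding pe \<kappa>_def by (simp add: algebra_simps)
      then show ?thesis unfolding k2 .
    qed
    have f1: "sig X A \<mu>1 < \<infinity>" "sig X A \<mu>2 < \<infinity>" using sm1 sm2 by auto
    have l1: "m \<le> psi X A y \<mu>1" "m \<le> psi X A y \<mu>2" using mlow m1s m2s f1 by auto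
    have "\<kappa> * (psi X A y \<mu>1 - m) + (1 - \<kappa>) * (psi X A y \<mu>2 - m) \<le> 0"
      using pe2 e0(3) by (simp add: algebra_simps)
    moreover have "0 \<le> \<kappa> * (psi X A y \<mu>1 - m)" "0 \<le> (1 - \<kappa>) * (psi X A y \<mu>2 - m)"
      using kp l1 by auto
    ultimately have "\<kappa> * (psi X A y \<mu>1 - m) \<le> 0" "(1 - \<kappa>) * (psi X A y \<mu>2 - m) \<le> 0" by linarith+
    then have u1: "psi X A y \<mu>1 \<le> m" "psi X A y \<mu>2 \<le> m" using kp by (auto simp: mult_le_0_iff)
    have Q1: "(\<Sum>\<alpha>\<in>A. (\<mu>1 \<alpha>)\<^sup>2) \<le> (\<Sum>\<alpha>\<in>A. (e0 \<alpha>)\<^sup>2)" using Qmax[OF m1s f1(1) u1(1)] .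
    have Q2: "(\<Sum>\<alpha>\<in>A. (\<mu>2 \<alpha>)\<^sup>2) \<le> (\<Sum>\<alpha>\<in>A. (e0 \<alpha>)\<^sup>2)" using Qmax[OF m2s f1(2) u1(2)] .
    have ek: "e0 \<alpha> = \<kappa> * \<mu>1 \<alpha> + (1 - \<kappa>) * \<mu>2 \<alpha>" for \<alpha>
    proof -
      have "e0 \<alpha> = \<kappa> * \<mu>1 \<alpha> + ((1 - \<theta>) * s2) * \<mu>2 \<alpha>"
        unfolding e0eq \<kappa>_def \<mu>1_def \<mu>2_def using s1p s2p by simp
      then show ?thesis unfolding k2 .
    qed
    have Qe: "(\<Sum>\<alpha>\<in>A. (e0 \<alpha>)\<^sup>2) = \<kappa> * (\<Sum>\<alpha>\<in>A. (\<mu>1 \<alpha>)\<^sup>2) + (1 - \<kappa>) * (\<Sum>\<alpha>\<in>A. (\<mu>2 \<alpha>)\<^sup>2)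
        - \<kappa> * (1 - \<kappa>) * (\<Sum>\<alpha>\<in>A. (\<mu>1 \<alpha> - \<mu>2 \<alpha>)\<^sup>2)"
    proof -
      have "(e0 \<alpha>)\<^sup>2 = \<kappa> * (\<mu>1 \<alpha>)\<^sup>2 + (1 - \<kappa>) * (\<mu>2 \<alpha>)\<^sup>2 - \<kappa> * (1 - \<kappa>) * (\<mu>1 \<alpha> - \<mu>2 \<alpha>)\<^sup>2" for \<alpha>
        unfolding ek by (simp add: power2_eq_square algebra_simps)
      then show ?thesis by (simp add: sum.distrib sum_subtractf sum_distrib_left)
    qed
    have "\<exists>\<alpha>\<in>A. \<mu>1 \<alpha> \<noteq> \<mu>2 \<alpha>"
    proof (rule ccontr)
      assume "\<not> (\<exists>\<alpha>\<in>A. \<mu>1 \<alpha> \<noteq> \<mu>2 \<alpha>)"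
      then have "\<nu>1 \<alpha> = (s1 / s2) * \<nu>2 \<alpha>" if "\<alpha> \<in> A" for \<alpha>
        using that s1p s2p unfolding \<mu>1_def \<mu>2_def by (auto simp: field_simps)
      moreover have "\<nu>1 \<alpha> = 0" "\<nu>2 \<alpha> = 0" if "\<alpha> \<notin> A" for \<alpha>
        using that n1 n2 unfolding Nbeta_def RA_def by auto
      ultimately have "\<nu>1 = (\<lambda>\<alpha>. (s1 / s2) * \<nu>2 \<alpha>)" by (metis mult_zero_right)
      with np show False unfolding proportional_def by blast
    qed
    then obtain \<alpha>0 where a0: "\<alpha>0 \<in> A" "\<mu>1 \<alpha>0 \<noteq> \<mu>2 \<alpha>0" by blast
    have "0 < (\<mu>1 \<alpha>0 - \<mu>2 \<alpha>0)\<^sup>2" using a0 by simp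
    also have "\<dots> \<le> (\<Sum>\<alpha>\<in>A. (\<mu>1 \<alpha> - \<mu>2 \<alpha>)\<^sup>2)"
      by (rule member_le_sum) (use a0 fA in auto)
    finally have pos: "0 < (\<Sum>\<alpha>\<in>A. (\<mu>1 \<alpha> - \<mu>2 \<alpha>)\<^sup>2)" .
    have "\<kappa> * (\<Sum>\<alpha>\<in>A. (\<mu>1 \<alpha>)\<^sup>2) + (1 - \<kappa>) * (\<Sum>\<alpha>\<in>A. (\<mu>2 \<alpha>)\<^sup>2)
          \<le> \<kappa> * (\<Sum>\<alpha>\<in>A. (e0 \<alpha>)\<^sup>2) + (1 - \<kappa>) * (\<Sum>\<alpha>\<in>A. (e0 \<alpha>)\<^sup>2)"
      using Q1 Q2 kp by (intro add_mono mult_left_mono) auto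
    moreover have "0 < \<kappa> * (1 - \<kappa>) * (\<Sum>\<alpha>\<in>A. (\<mu>1 \<alpha> - \<mu>2 \<alpha>)\<^sup>2)" using kp pos by simp
    ultimately show False using Qe by (simp add: algebra_simps)
  qed
  ultimately show ?thesis unfolding X_circuit_def using e0N e0(2) unfolding sig_def by blast
qed


lemma circuit_key:
  assumes X: "X \<noteq> {}" and fA: "finite A" and b: "\<beta> \<in> A"
    and H: "\<And>l. X_circuit X A \<beta> l \<Longrightarrow> l \<beta> = -1 \<Longrightarrow> 0 \<le> psi X A y l"
    and nu: "\<nu> \<in> Nbeta A \<beta>"
  shows "0 \<le> ereal (\<Sum>\<alpha>\<in>A. y \<alpha> * \<nu> \<alpha>) + sig X A \<nu>"
proof (rule ccontr)
  assume neg: "\<not> 0 \<le> ereal (\<Sum>\<alpha>\<in>A. y \<alpha> * \<nu> \<alpha>) + sig X A \<nu>"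
  have fin: "sig X A \<nu> < \<infinity>"
  proof (rule ccontr)
    assume "\<not> sig X A \<nu> < \<infinity>"
    then have "sig X A \<nu> = \<infinity>" by simp
    with neg show False by simp
  qed
  define r where "r = real_of_ereal (sig X A \<nu>)"
  have sr: "sig X A \<nu> = ereal r" unfolding r_def using sig_finite[OF X fin] .
  have negr: "(\<Sum>\<alpha>\<in>A. y \<alpha> * \<nu> \<alpha>) + r < 0" using neg sr by simp
  have "\<nu> \<noteq> (\<lambda>_. 0)"
  proof
    assume "\<nu> = (\<lambda>_. 0)"
    then show False using neg sig_zero[OF X, of A] by simp
  qed
  then have nb: "\<nu> \<beta> < 0" using Nbeta_neg[OF nu fA b] by blast
  define s where "s = - \<nu> \<beta>"
  have sp: "s > 0" using nb s_def by simp
  define \<nu>1 where "\<nu>1 = (\<lambda>\<alpha>. (1 / s) * \<nu> \<alpha>)"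
  have n1s: "\<nu>1 \<in> slice A \<beta>" unfolding \<nu>1_def s_def by (rule normalize_slice[OF nu nb])
  have sn1: "sig X A \<nu>1 = ereal (r / s)" unfolding \<nu>1_def
    using sig_scale[OF X, of "1/s" A \<nu>] sp sr by simp
  have pn1: "psi X A y \<nu>1 = (1 / s) * ((\<Sum>\<alpha>\<in>A. y \<alpha> * \<nu> \<alpha>) + r)"
    unfolding psi_def sn1 by (simp add: \<nu>1_def sum_scale_y distrib_left sum_divide_distrib[symmetric])
  have pn1neg: "psi X A y \<nu>1 < 0" unfolding pn1 using sp negr by (simp add: divide_neg_pos)
  define F0 where "F0 = {\<mu>. \<mu> \<in> slice A \<beta> \<and> sig X A \<mu> < \<infinity>}"
  have n1F0: "\<nu>1 \<in> F0" unfolding F0_def using n1s sn1 by simp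
  obtain C where C: "\<And>\<mu>. \<mu> \<in> F0 \<Longrightarrow> - C \<le> psi X A y \<mu>"
    using psi_bdd[OF X fA b, of y] unfolding F0_def by blast
  have bddb: "bdd_below (psi X A y ` F0)" unfolding bdd_below_def using C by blast
  define m where "m = Inf (psi X A y ` F0)"
  have mlow: "m \<le> psi X A y \<mu>" if "\<mu> \<in> F0" for \<mu>
    unfolding m_def by (rule cInf_lower) (use that bddb in auto)
  have mneg: "m < 0" using mlow[OF n1F0] pn1neg by simp
  have "\<forall>n. \<exists>\<mu>. \<mu> \<in> F0 \<and> psi X A y \<mu> < m + inverse (real (Suc n))"
  proof
    fix n
    have "Inf (psi X A y ` F0) < m + inverse (real (Suc n))" unfolding m_def by simp
    from cInf_lessD[OF _ this] n1F0 show "\<exists>\<mu>. \<mu> \<in> F0 \<and> psi X A y \<mu> < m + inverse (real (Suc n))"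
      by blast
  qed
  then obtain g where g: "\<And>n. g n \<in> F0" "\<And>n. psi X A y (g n) < m + inverse (real (Suc n))"
    by metis
  have gb: "\<bar>g n \<alpha>\<bar> \<le> 1" if "\<alpha> \<in> A" for n \<alpha>
    using slice_bound[OF _ fA b that] g(1)[of n] unfolding F0_def by blast
  obtain rr L where rr: "strict_mono rr" and L: "\<forall>\<alpha>\<in>A. (\<lambda>n. g (rr n) \<alpha>) \<longlonglongrightarrow> L \<alpha>"
    using subseq_fin[OF fA, of g 1] gb by blast
  have "g (rr n) \<in> slice A \<beta> \<and> sig X A (g (rr n)) < \<infinity> \<and> psi X A y (g (rr n)) \<le> m + inverse (real (Suc n))" for n
  proof -
    have "n \<le> rr n" using seq_suble[OF rr] .
    then have iv: "inverse (real (Suc (rr n))) \<le> inverse (real (Suc n))"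
      by (simp add: le_imp_inverse_le)
    have "psi X A y (g (rr n)) \<le> m + inverse (real (Suc n))" using g(2)[of "rr n"] iv by linarith
    then show ?thesis using g(1)[of "rr n"] unfolding F0_def by auto
  qed
  from lim_slice[OF X fA b this LIMSEQ_inverse_real_of_nat] L
  have ex: "(\<lambda>\<alpha>. if \<alpha> \<in> A then L \<alpha> else 0) \<in> slice A \<beta> \<and> sig X A (\<lambda>\<alpha>. if \<alpha> \<in> A then L \<alpha> else 0) < \<infinity> \<and>
         psi X A y (\<lambda>\<alpha>. if \<alpha> \<in> A then L \<alpha> else 0) \<le> m" by blast
  define F where "F = {\<mu>. \<mu> \<in> slice A \<beta> \<and> sig X A \<mu> < \<infinity> \<and> psi X A y \<mu> \<le> m}"
  have Fne: "F \<noteq> {}" using ex unfolding F_def by blast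
  define Q where "Q = (\<lambda>\<mu>::'a \<Rightarrow> real. \<Sum>\<alpha>\<in>A. (\<mu> \<alpha>)\<^sup>2)"
  have Qb: "Q \<mu> \<le> real (card A)" if "\<mu> \<in> F" for \<mu>
  proof -
    have "(\<mu> \<alpha>)\<^sup>2 \<le> 1" if "\<alpha> \<in> A" for \<alpha>
    proof -
      have "\<bar>\<mu> \<alpha>\<bar> \<le> 1" using slice_bound[OF _ fA b that] \<open>\<mu> \<in> F\<close> unfolding F_def by blast
      then have "\<bar>\<mu> \<alpha>\<bar>\<^sup>2 \<le> 1" by (intro power_le_one) auto
      then show ?thesis by simp
    qed
    then have "Q \<mu> \<le> (\<Sum>\<alpha>\<in>A. 1)" unfolding Q_def by (rule sum_mono)
    then show ?thesis by simp
  qed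
  have bdda: "bdd_above (Q ` F)" unfolding bdd_above_def using Qb by blast
  define M where "M = Sup (Q ` F)"
  have Mup: "Q \<mu> \<le> M" if "\<mu> \<in> F" for \<mu>
    unfolding M_def by (rule cSup_upper) (use that bdda in auto)
  have "\<forall>n. \<exists>\<mu>. \<mu> \<in> F \<and> M - inverse (real (Suc n)) < Q \<mu>"
  proof
    fix n
    have "M - inverse (real (Suc n)) < Sup (Q ` F)" unfolding M_def by simp
    from less_cSupD[OF _ this] Fne show "\<exists>\<mu>. \<mu> \<in> F \<and> M - inverse (real (Suc n)) < Q \<mu>"
      by blast
  qed
  then obtain h where h: "\<And>n. h n \<in> F" "\<And>n. M - inverse (real (Suc n)) < Q (h n)"
    by metis
  have hb: "\<bar>h n \<alpha>\<bar> \<le> 1" if "\<alpha> \<in> A" for n \<alpha>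
    using slice_bound[OF _ fA b that] h(1)[of n] unfolding F_def by blast
  obtain r2 L2 where r2: "strict_mono r2" and L2: "\<forall>\<alpha>\<in>A. (\<lambda>n. h (r2 n) \<alpha>) \<longlonglongrightarrow> L2 \<alpha>"
    using subseq_fin[OF fA, of h 1] hb by blast
  have hh: "h (r2 n) \<in> slice A \<beta> \<and> sig X A (h (r2 n)) < \<infinity> \<and> psi X A y (h (r2 n)) \<le> m + 0" for n
    using h(1)[of "r2 n"] unfolding F_def by auto
  from lim_slice[OF X fA b, of "\<lambda>n. h (r2 n)" y m "\<lambda>n. 0" L2, OF hh tendsto_const] L2
  have ex2: "(\<lambda>\<alpha>. if \<alpha> \<in> A then L2 \<alpha> else 0) \<in> F" unfolding F_def by blast
  define e0 where "e0 = (\<lambda>\<alpha>. if \<alpha> \<in> A then L2 \<alpha> else 0)"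
  have e0F: "e0 \<in> F" using ex2 unfolding e0_def .
  have "(\<lambda>n. Q (h (r2 n))) \<longlonglongrightarrow> Q e0"
    unfolding Q_def e0_def by (simp, intro tendsto_intros tendsto_sum) (use L2 in auto)
  moreover have "(\<lambda>n. M - inverse (real (Suc n))) \<longlonglongrightarrow> M - 0"
    by (intro tendsto_intros LIMSEQ_inverse_real_of_nat)
  moreover have "M - inverse (real (Suc n)) \<le> Q (h (r2 n))" for n
  proof -
    have "n \<le> r2 n" using seq_suble[OF r2] .
    then have "inverse (real (Suc (r2 n))) \<le> inverse (real (Suc n))"
      by (simp add: le_imp_inverse_le)
    then show ?thesis using h(2)[of "r2 n"] by linarith
  qed
  ultimately have "M - 0 \<le> Q e0" by (intro LIMSEQ_le) auto
  then have Qe0: "Q e0 = M" using Mup[OF e0F] by simp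
  have circ: "X_circuit X A \<beta> e0"
  proof (rule extreme_is_circuit[OF X fA b, of m y])
    show "\<And>\<mu>. \<mu> \<in> slice A \<beta> \<Longrightarrow> sig X A \<mu> < \<infinity> \<Longrightarrow> m \<le> psi X A y \<mu>"
      using mlow unfolding F0_def by blast
    show "e0 \<in> slice A \<beta>" "sig X A e0 < \<infinity>" "psi X A y e0 \<le> m" using e0F unfolding F_def by auto
    show "\<And>\<mu>. \<mu> \<in> slice A \<beta> \<Longrightarrow> sig X A \<mu> < \<infinity> \<Longrightarrow> psi X A y \<mu> \<le> m \<Longrightarrow>
                 (\<Sum>\<alpha>\<in>A. (\<mu> \<alpha>)\<^sup>2) \<le> (\<Sum>\<alpha>\<in>A. (e0 \<alpha>)\<^sup>2)"
      using Mup Qe0 unfolding F_def Q_def by auto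
  qed
  have "e0 \<beta> = -1" using e0F unfolding F_def slice_def by auto
  from H[OF circ this] have "0 \<le> psi X A y e0" .
  moreover have "psi X A y e0 \<le> m" using e0F unfolding F_def by auto
  ultimately show False using mneg by simp
qed


lemma abs_le_sq1: "\<bar>u::real\<bar> \<le> u\<^sup>2 + 1"
proof (cases "\<bar>u\<bar> \<le> 1")
  case True then show ?thesis by (smt (verit) zero_le_power2)
next
  case False
  then have "\<bar>u\<bar> * 1 \<le> \<bar>u\<bar> * \<bar>u\<bar>" by (intro mult_left_mono) auto
  then show ?thesis by (simp add: power2_eq_square abs_mult_self_eq)
qed

lemma sq_lt_imp_abs_lt: "(u::real)\<^sup>2 < c\<^sup>2 \<Longrightarrow> 0 \<le> c \<Longrightarrow> \<bar>u\<bar> < c"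
  by (metis power2_abs power_less_imp_less_base)


lemma near_point:
  fixes y :: "'a::euclidean_space \<Rightarrow> real"
  assumes X: "X \<noteq> {}" and cX: "convex X" and fA: "finite A" and b: "\<beta> \<in> A"
    and key: "\<And>\<nu>. \<nu> \<in> Nbeta A \<beta> \<Longrightarrow> 0 \<le> ereal (\<Sum>\<alpha>\<in>A. y \<alpha> * \<nu> \<alpha>) + sig X A \<nu>"
    and eps: "0 < \<epsilon>"
  shows "\<exists>s. (\<exists>x\<in>X. \<forall>\<alpha>\<in>A-{\<beta>}. (\<alpha> - \<beta>) \<bullet> x \<le> s \<alpha>) \<and>
             (\<Sum>\<alpha>\<in>A-{\<beta>}. (s \<alpha> - (y \<alpha> - y \<beta>))\<^sup>2) < \<epsilon>"
proof (rule ccontr)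
  define A' where "A' = A - {\<beta>}"
  define z where "z = (\<lambda>\<alpha>. y \<alpha> - y \<beta>)"
  define D where "D = {s. \<exists>x\<in>X. \<forall>\<alpha>\<in>A'. (\<alpha> - \<beta>) \<bullet> x \<le> s \<alpha>}"
  define dist2 where "dist2 = (\<lambda>s. \<Sum>\<alpha>\<in>A'. (s \<alpha> - z \<alpha>)\<^sup>2)"
  have fA': "finite A'" using fA A'_def by simp
  assume "\<not> ?thesis"
  then have far: "\<epsilon> \<le> dist2 s" if "s \<in> D" for s
    using that unfolding D_def dist2_def A'_def z_def by (auto simp: not_less)
  obtain x0 where x0: "x0 \<in> X" using X by auto
  have Dne: "(\<lambda>\<alpha>. (\<alpha> - \<beta>) \<bullet> x0) \<in> D" unfolding D_def using x0 by auto
  have Dup: "s(\<alpha> := s \<alpha> + l) \<in> D" if "s \<in> D" "0 \<le> l" for s \<alpha> l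
    using that unfolding D_def by (auto, metis add_increasing2)
  have Dconv: "(\<lambda>\<alpha>. (1 - t) * s1 \<alpha> + t * s2 \<alpha>) \<in> D" if hh: "s1 \<in> D" "s2 \<in> D" "0 \<le> t" "t \<le> 1" for s1 s2 t
  proof -
    obtain x1 where x1: "x1 \<in> X" "\<forall>\<alpha>\<in>A'. (\<alpha> - \<beta>) \<bullet> x1 \<le> s1 \<alpha>" using hh(1) unfolding D_def by auto
    obtain x2 where x2: "x2 \<in> X" "\<forall>\<alpha>\<in>A'. (\<alpha> - \<beta>) \<bullet> x2 \<le> s2 \<alpha>" using hh(2) unfolding D_def by auto
    have xin: "(1 - t) *\<^sub>R x1 + t *\<^sub>R x2 \<in> X" using cX x1(1) x2(1) hh(3,4) unfolding convex_def by auto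
    have "(\<alpha> - \<beta>) \<bullet> ((1 - t) *\<^sub>R x1 + t *\<^sub>R x2) \<le> (1 - t) * s1 \<alpha> + t * s2 \<alpha>" if "\<alpha> \<in> A'" for \<alpha>
    proof -
      have "(\<alpha> - \<beta>) \<bullet> ((1 - t) *\<^sub>R x1 + t *\<^sub>R x2) = (1 - t) * ((\<alpha> - \<beta>) \<bullet> x1) + t * ((\<alpha> - \<beta>) \<bullet> x2)"
        by (simp add: inner_add_right)
      also have "\<dots> \<le> (1 - t) * s1 \<alpha> + t * s2 \<alpha>"
        using x1(2) x2(2) that \<open>0 \<le> t\<close> \<open>t \<le> 1\<close> by (intro add_mono mult_left_mono) auto
      finally show ?thesis .
    qed
    then show ?thesis unfolding D_def using xin by blast
  qed
  have bddb: "bdd_below (dist2 ` D)" unfolding bdd_below_def dist2_def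
    by (rule exI[of _ 0]) (auto intro: sum_nonneg)
  define \<delta> where "\<delta> = Inf (dist2 ` D)"
  have dlow: "\<delta> \<le> dist2 s" if "s \<in> D" for s unfolding \<delta>_def by (rule cInf_lower) (use that bddb in auto)
  have deps: "\<epsilon> \<le> \<delta>" unfolding \<delta>_def by (rule cInf_greatest) (use Dne far in auto)
  have "\<forall>n. \<exists>s. s \<in> D \<and> dist2 s < \<delta> + inverse (real (Suc n))"
  proof
    fix n
    have "Inf (dist2 ` D) < \<delta> + inverse (real (Suc n))" unfolding \<delta>_def by simp
    from cInf_lessD[OF _ this] Dne show "\<exists>s. s \<in> D \<and> dist2 s < \<delta> + inverse (real (Suc n))" by blast
  qed
  then obtain g where g: "\<And>n. g n \<in> D" "\<And>n. dist2 (g n) < \<delta> + inverse (real (Suc n))" by metis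
  have gb: "\<bar>g n \<alpha> - z \<alpha>\<bar> \<le> \<delta> + 2" if "\<alpha> \<in> A'" for n \<alpha>
  proof -
    have "(g n \<alpha> - z \<alpha>)\<^sup>2 \<le> dist2 (g n)" unfolding dist2_def
      by (rule member_le_sum) (use that fA' in auto)
    moreover have "inverse (real (Suc n)) \<le> 1" by (simp add: inverse_le_1_iff)
    ultimately have "(g n \<alpha> - z \<alpha>)\<^sup>2 \<le> \<delta> + 1" using g(2)[of n] by linarith
    then show ?thesis using abs_le_sq1[of "g n \<alpha> - z \<alpha>"] by linarith
  qed
  obtain rr Lp where rr: "strict_mono rr" and Lp: "\<forall>\<alpha>\<in>A'. (\<lambda>n. g (rr n) \<alpha> - z \<alpha>) \<longlonglongrightarrow> Lp \<alpha>"
    using subseq_fin[OF fA', of "\<lambda>n \<alpha>. g n \<alpha> - z \<alpha>" "\<delta> + 2"] gb by blast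
  define p where "p = (\<lambda>\<alpha>. Lp \<alpha> + z \<alpha>)"
  have gp: "(\<lambda>n. g (rr n) \<alpha>) \<longlonglongrightarrow> p \<alpha>" if "\<alpha> \<in> A'" for \<alpha>
  proof -
    have "(\<lambda>n. (g (rr n) \<alpha> - z \<alpha>) + z \<alpha>) \<longlonglongrightarrow> Lp \<alpha> + z \<alpha>" using Lp that by (intro tendsto_intros) auto
    then show ?thesis unfolding p_def by simp
  qed
  have dlim: "(\<lambda>n. dist2 (g (rr n))) \<longlonglongrightarrow> dist2 p"
    unfolding dist2_def by (intro tendsto_intros tendsto_sum) (use gp in auto)
  have dp1: "\<delta> \<le> dist2 p" using dlim by (rule LIMSEQ_le_const) (use dlow g(1) in auto)
  have dp2: "dist2 p \<le> \<delta> + 0"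
  proof (rule LIMSEQ_le[OF dlim])
    show "(\<lambda>n. \<delta> + inverse (real (Suc n))) \<longlonglongrightarrow> \<delta> + 0" by (intro tendsto_intros LIMSEQ_inverse_real_of_nat)
    show "\<exists>N. \<forall>n\<ge>N. dist2 (g (rr n)) \<le> \<delta> + inverse (real (Suc n))"
    proof (intro exI allI impI)
      fix n :: nat
      have "n \<le> rr n" using seq_suble[OF rr] .
      then have iv: "inverse (real (Suc (rr n))) \<le> inverse (real (Suc n))" by (simp add: le_imp_inverse_le)
      show "dist2 (g (rr n)) \<le> \<delta> + inverse (real (Suc n))" using g(2)[of "rr n"] iv by linarith
    qed
  qed
  have dp: "dist2 p = \<delta>" using dp1 dp2 by simp
  define \<mu> where "\<mu> = (\<lambda>\<alpha>. z \<alpha> - p \<alpha>)"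
  define W where "W = (\<lambda>s. \<Sum>\<alpha>\<in>A'. (s \<alpha> - p \<alpha>) * \<mu> \<alpha>)"
  have Wle: "W s \<le> 0" if s: "s \<in> D" for s
  proof (rule ccontr)
    assume "\<not> W s \<le> 0"
    then have Wp: "W s > 0" by simp
    define V where "V = (\<Sum>\<alpha>\<in>A'. (s \<alpha> - p \<alpha>)\<^sup>2)"
    have V0: "0 \<le> V" unfolding V_def by (intro sum_nonneg) auto
    define t where "t = min 1 (W s / (V + 1))"
    have t0: "0 < t" "t \<le> 1" unfolding t_def using Wp V0 by auto
    have "\<delta> \<le> dist2 (\<lambda>\<alpha>. (1 - t) * p \<alpha> + t * s \<alpha>)"
    proof -
      have lim: "(\<lambda>n. dist2 (\<lambda>\<alpha>. (1 - t) * g (rr n) \<alpha> + t * s \<alpha>)) \<longlonglongrightarrow> dist2 (\<lambda>\<alpha>. (1 - t) * p \<alpha> + t * s \<alpha>)"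
        unfolding dist2_def by (intro tendsto_intros tendsto_sum) (use gp in auto)
      show ?thesis by (rule LIMSEQ_le_const[OF lim]) (use dlow Dconv[OF g(1) s] t0 in auto)
    qed
    moreover have "dist2 (\<lambda>\<alpha>. (1 - t) * p \<alpha> + t * s \<alpha>) = dist2 p - 2 * t * W s + t\<^sup>2 * V"
    proof -
      have "((1 - t) * p \<alpha> + t * s \<alpha> - z \<alpha>)\<^sup>2 = (p \<alpha> - z \<alpha>)\<^sup>2 - 2 * t * ((s \<alpha> - p \<alpha>) * \<mu> \<alpha>) + t\<^sup>2 * (s \<alpha> - p \<alpha>)\<^sup>2" for \<alpha>
        unfolding \<mu>_def by (simp add: power2_eq_square algebra_simps)
      then show ?thesis unfolding dist2_def W_def V_def
        by (simp add: sum.distrib sum_subtractf sum_distrib_left)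
    qed
    ultimately have "2 * t * W s \<le> t\<^sup>2 * V" using dp by simp
    then have "2 * W s \<le> t * V" using t0 by (simp add: power2_eq_square mult.assoc)
    moreover have "t * V \<le> (W s / (V + 1)) * V" unfolding t_def using V0 by (intro mult_right_mono) auto
    moreover have "(W s / (V + 1)) * V < W s"
    proof -
      have "(W s / (V + 1)) * V = W s * (V / (V + 1))" by simp
      also have "\<dots> < W s * 1" using Wp V0 by (intro mult_strict_left_mono) auto
      finally show ?thesis by simp
    qed
    ultimately show False using Wp by linarith
  qed
  have mu_np: "\<mu> \<alpha> \<le> 0" if a: "\<alpha> \<in> A'" for \<alpha>
  proof (rule ccontr)
    assume "\<not> \<mu> \<alpha> \<le> 0"
    then have mp: "\<mu> \<alpha> > 0" by simp
    define s0 where "s0 = (\<lambda>\<alpha>. (\<alpha> - \<beta>) \<bullet> x0)"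
    define l where "l = (\<bar>W s0\<bar> + 1) / \<mu> \<alpha>"
    have l0: "0 \<le> l" unfolding l_def using mp by simp
    have "W (s0(\<alpha> := s0 \<alpha> + l)) = W s0 + l * \<mu> \<alpha>"
    proof -
      have "W (s0(\<alpha> := s0 \<alpha> + l)) = (\<Sum>\<gamma>\<in>A'. (s0 \<gamma> - p \<gamma>) * \<mu> \<gamma> + (if \<gamma> = \<alpha> then l * \<mu> \<alpha> else 0))"
        unfolding W_def by (intro sum.cong) (auto simp: algebra_simps)
      also have "\<dots> = W s0 + l * \<mu> \<alpha>" unfolding W_def using a fA' by (simp add: sum.distrib)
      finally show ?thesis .
    qed
    also have "\<dots> = W s0 + (\<bar>W s0\<bar> + 1)" unfolding l_def using mp by simp
    also have "\<dots> > 0" by linarith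
    finally show False using Wle[OF Dup[OF Dne[folded s0_def] l0, of \<alpha>]] by simp
  qed
  define \<nu> where "\<nu> = (\<lambda>\<alpha>. if \<alpha> \<in> A' then - \<mu> \<alpha> else if \<alpha> = \<beta> then (\<Sum>\<gamma>\<in>A'. \<mu> \<gamma>) else 0)"
  have sumA: "(\<Sum>\<alpha>\<in>A. f \<alpha>) = f \<beta> + (\<Sum>\<alpha>\<in>A'. f \<alpha>)" for f :: "'a \<Rightarrow> real"
    unfolding A'_def using sum.remove[OF fA b] by simp
  have bA': "\<beta> \<notin> A'" unfolding A'_def by simp
  have nuN: "\<nu> \<in> Nbeta A \<beta>"
  proof -
    have "(\<Sum>\<alpha>\<in>A'. \<nu> \<alpha>) = - (\<Sum>\<gamma>\<in>A'. \<mu> \<gamma>)" unfolding \<nu>_def by (simp add: sum_negf)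
    then have "(\<Sum>\<alpha>\<in>A. \<nu> \<alpha>) = 0" using sumA[of \<nu>] bA' unfolding \<nu>_def by simp
    moreover have "\<nu> \<in> RA A" unfolding RA_def \<nu>_def A'_def using b by auto
    moreover have "\<forall>\<alpha>\<in>A. \<alpha> \<noteq> \<beta> \<longrightarrow> 0 \<le> \<nu> \<alpha>" unfolding \<nu>_def A'_def using mu_np A'_def by auto
    ultimately show ?thesis unfolding Nbeta_def by simp
  qed
  have ynu: "(\<Sum>\<alpha>\<in>A. y \<alpha> * \<nu> \<alpha>) = - (\<Sum>\<alpha>\<in>A'. \<mu> \<alpha> * z \<alpha>)"
  proof -
    have "(\<Sum>\<alpha>\<in>A'. y \<alpha> * \<nu> \<alpha>) = (\<Sum>\<alpha>\<in>A'. - (y \<alpha> * \<mu> \<alpha>))" unfolding \<nu>_def by (intro sum.cong) auto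
    then have "(\<Sum>\<alpha>\<in>A. y \<alpha> * \<nu> \<alpha>) = y \<beta> * (\<Sum>\<gamma>\<in>A'. \<mu> \<gamma>) - (\<Sum>\<alpha>\<in>A'. y \<alpha> * \<mu> \<alpha>)"
      using sumA[of "\<lambda>\<alpha>. y \<alpha> * \<nu> \<alpha>"] bA' unfolding \<nu>_def by (simp add: sum_negf)
    also have "\<dots> = - (\<Sum>\<alpha>\<in>A'. \<mu> \<alpha> * z \<alpha>)" unfolding z_def
      by (simp add: sum_distrib_left sum_subtractf algebra_simps)
    finally show ?thesis .
  qed
  have signu: "sig X A \<nu> \<le> ereal (\<Sum>\<alpha>\<in>A'. \<mu> \<alpha> * p \<alpha>)"
  proof (rule sig_le)
    fix x assume x: "x \<in> X"
    have "(\<Sum>\<alpha>\<in>A'. \<nu> \<alpha> * (\<alpha> \<bullet> x)) = (\<Sum>\<alpha>\<in>A'. - (\<mu> \<alpha> * (\<alpha> \<bullet> x)))" unfolding \<nu>_def by (intro sum.cong) auto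
    then have "- (\<Sum>\<alpha>\<in>A. \<nu> \<alpha> * (\<alpha> \<bullet> x)) = (\<Sum>\<alpha>\<in>A'. \<mu> \<alpha> * (\<alpha> \<bullet> x)) - (\<Sum>\<gamma>\<in>A'. \<mu> \<gamma>) * (\<beta> \<bullet> x)"
      using sumA[of "\<lambda>\<alpha>. \<nu> \<alpha> * (\<alpha> \<bullet> x)"] bA' unfolding \<nu>_def by (simp add: sum_negf)
    also have "\<dots> = (\<Sum>\<alpha>\<in>A'. \<mu> \<alpha> * ((\<alpha> - \<beta>) \<bullet> x))"
      by (simp add: inner_diff_left sum_distrib_right sum_subtractf algebra_simps)
    also have "\<dots> \<le> (\<Sum>\<alpha>\<in>A'. \<mu> \<alpha> * p \<alpha>)"
    proof -
      have "(\<lambda>\<alpha>. (\<alpha> - \<beta>) \<bullet> x) \<in> D" unfolding D_def using x by auto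
      from Wle[OF this] have "W (\<lambda>\<alpha>. (\<alpha> - \<beta>) \<bullet> x) \<le> 0" .
      moreover have "W (\<lambda>\<alpha>. (\<alpha> - \<beta>) \<bullet> x) = (\<Sum>\<alpha>\<in>A'. \<mu> \<alpha> * ((\<alpha> - \<beta>) \<bullet> x)) - (\<Sum>\<alpha>\<in>A'. \<mu> \<alpha> * p \<alpha>)"
        unfolding W_def by (simp only: sum_subtractf[symmetric]) (simp add: algebra_simps)
      ultimately show ?thesis by simp
    qed
    finally show "- (\<Sum>\<alpha>\<in>A. \<nu> \<alpha> * (\<alpha> \<bullet> x)) \<le> (\<Sum>\<alpha>\<in>A'. \<mu> \<alpha> * p \<alpha>)" .
  qed
  have "ereal (\<Sum>\<alpha>\<in>A. y \<alpha> * \<nu> \<alpha>) + sig X A \<nu> \<le> ereal (- (\<Sum>\<alpha>\<in>A'. \<mu> \<alpha> * z \<alpha>)) + ereal (\<Sum>\<alpha>\<in>A'. \<mu> \<alpha> * p \<alpha>)"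
    unfolding ynu by (rule add_left_mono[OF signu])
  also have "\<dots> = ereal (- dist2 p)"
  proof -
    have "- (\<Sum>\<alpha>\<in>A'. \<mu> \<alpha> * z \<alpha>) + (\<Sum>\<alpha>\<in>A'. \<mu> \<alpha> * p \<alpha>) = - dist2 p"
    proof -
      have "- (\<Sum>\<alpha>\<in>A'. \<mu> \<alpha> * z \<alpha>) + (\<Sum>\<alpha>\<in>A'. \<mu> \<alpha> * p \<alpha>) = (\<Sum>\<alpha>\<in>A'. - (\<mu> \<alpha> * z \<alpha>) + \<mu> \<alpha> * p \<alpha>)"
        by (simp only: sum.distrib sum_negf)
      also have "\<dots> = (\<Sum>\<alpha>\<in>A'. - ((p \<alpha> - z \<alpha>)\<^sup>2))"
        unfolding \<mu>_def by (intro sum.cong) (auto simp: power2_eq_square algebra_simps)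
      finally show ?thesis unfolding dist2_def by (simp add: sum_negf)
    qed
    then show ?thesis by simp
  qed
  finally have "ereal (\<Sum>\<alpha>\<in>A. y \<alpha> * \<nu> \<alpha>) + sig X A \<nu> \<le> ereal (- dist2 p)" .
  moreover have "- dist2 p < 0" using dp deps eps by simp
  moreover note key[OF nuN]
  ultimately have "0 \<le> ereal (- dist2 p)" by (meson order_trans)
  then have "0 \<le> - dist2 p" by (simp add: zero_ereal_def)
  with \<open>- dist2 p < 0\<close> show False by simp
qed


lemma age_dual:
  fixes y :: "'a::euclidean_space \<Rightarrow> real"
  assumes X: "X \<noteq> {}" and cX: "convex X" and fA: "finite A" and b: "\<beta> \<in> A"
    and key: "\<And>\<nu>. \<nu> \<in> Nbeta A \<beta> \<Longrightarrow> 0 \<le> ereal (\<Sum>\<alpha>\<in>A. y \<alpha> * \<nu> \<alpha>) + sig X A \<nu>"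
    and d: "d \<in> SAGE_beta X A \<beta>"
  shows "0 \<le> (\<Sum>\<alpha>\<in>A. exp (y \<alpha>) * d \<alpha>)"
proof -
  define A' where "A' = A - {\<beta>}"
  define z where "z = (\<lambda>\<alpha>. y \<alpha> - y \<beta>)"
  have fA': "finite A'" using fA A'_def by simp
  have sumA: "(\<Sum>\<alpha>\<in>A. f \<alpha>) = f \<beta> + (\<Sum>\<alpha>\<in>A'. f \<alpha>)" for f :: "'a \<Rightarrow> real"
    unfolding A'_def using sum.remove[OF fA b] by simp
  have dpos: "0 \<le> d \<alpha>" if "\<alpha> \<in> A'" for \<alpha> using d that unfolding SAGE_beta_def A'_def by auto
  have dsig: "0 \<le> (\<Sum>\<alpha>\<in>A. d \<alpha> * exp (\<alpha> \<bullet> x))" if "x \<in> X" for x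
    using d that unfolding SAGE_beta_def signomial_def by auto
  have "\<forall>n. \<exists>s. (\<exists>x\<in>X. \<forall>\<alpha>\<in>A'. (\<alpha> - \<beta>) \<bullet> x \<le> s \<alpha>) \<and>
             (\<Sum>\<alpha>\<in>A'. (s \<alpha> - z \<alpha>)\<^sup>2) < (inverse (real (Suc n)))\<^sup>2"
    unfolding A'_def z_def by (intro allI near_point[OF X cX fA b key]) auto
  then obtain S where S: "\<And>n. \<exists>x\<in>X. \<forall>\<alpha>\<in>A'. (\<alpha> - \<beta>) \<bullet> x \<le> S n \<alpha>"
    "\<And>n. (\<Sum>\<alpha>\<in>A'. (S n \<alpha> - z \<alpha>)\<^sup>2) < (inverse (real (Suc n)))\<^sup>2" by metis
  have Sc: "(\<lambda>n. S n \<alpha>) \<longlonglongrightarrow> z \<alpha>" if a: "\<alpha> \<in> A'" for \<alpha>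
  proof -
    have "(\<lambda>n. S n \<alpha> - z \<alpha>) \<longlonglongrightarrow> 0"
    proof (rule LIMSEQ_norm_0)
      fix n
      have "(S n \<alpha> - z \<alpha>)\<^sup>2 \<le> (\<Sum>\<alpha>\<in>A'. (S n \<alpha> - z \<alpha>)\<^sup>2)"
        by (rule member_le_sum) (use a fA' in auto)
      then have "(S n \<alpha> - z \<alpha>)\<^sup>2 < (inverse (real (Suc n)))\<^sup>2" using S(2)[of n] by linarith
      then have "\<bar>S n \<alpha> - z \<alpha>\<bar> < inverse (real (Suc n))" by (rule sq_lt_imp_abs_lt) simp
      then show "norm (S n \<alpha> - z \<alpha>) < 1 / real (Suc n)" by (simp add: inverse_eq_divide)
    qed
    then have "(\<lambda>n. (S n \<alpha> - z \<alpha>) + z \<alpha>) \<longlonglongrightarrow> 0 + z \<alpha>" by (intro tendsto_intros)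
    then show ?thesis by simp
  qed
  have lim: "(\<lambda>n. \<Sum>\<alpha>\<in>A'. d \<alpha> * exp (S n \<alpha>)) \<longlonglongrightarrow> (\<Sum>\<alpha>\<in>A'. d \<alpha> * exp (z \<alpha>))"
    by (intro tendsto_intros tendsto_sum) (use Sc in auto)
  have lb: "- d \<beta> \<le> (\<Sum>\<alpha>\<in>A'. d \<alpha> * exp (S n \<alpha>))" for n
  proof -
    obtain x where x: "x \<in> X" "\<forall>\<alpha>\<in>A'. (\<alpha> - \<beta>) \<bullet> x \<le> S n \<alpha>" using S(1)[of n] by blast
    have ex: "exp (\<alpha> \<bullet> x) = exp (\<beta> \<bullet> x) * exp ((\<alpha> - \<beta>) \<bullet> x)" for \<alpha>
      by (simp add: inner_diff_left exp_diff)
    have "0 \<le> (\<Sum>\<alpha>\<in>A. d \<alpha> * exp (\<alpha> \<bullet> x))" using dsig[OF x(1)] .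
    also have "\<dots> = exp (\<beta> \<bullet> x) * (d \<beta> + (\<Sum>\<alpha>\<in>A'. d \<alpha> * exp ((\<alpha> - \<beta>) \<bullet> x)))"
    proof -
      have "(\<Sum>\<alpha>\<in>A'. d \<alpha> * exp (\<alpha> \<bullet> x)) = (\<Sum>\<alpha>\<in>A'. exp (\<beta> \<bullet> x) * (d \<alpha> * exp ((\<alpha> - \<beta>) \<bullet> x)))"
        by (rule sum.cong[OF refl]) (simp add: inner_diff_left exp_diff)
      then show ?thesis unfolding sumA[of "\<lambda>\<alpha>. d \<alpha> * exp (\<alpha> \<bullet> x)"]
        by (simp add: distrib_left sum_distrib_left)
    qed
    finally have "0 \<le> d \<beta> + (\<Sum>\<alpha>\<in>A'. d \<alpha> * exp ((\<alpha> - \<beta>) \<bullet> x))"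
      by (simp add: zero_le_mult_iff)
    moreover have "(\<Sum>\<alpha>\<in>A'. d \<alpha> * exp ((\<alpha> - \<beta>) \<bullet> x)) \<le> (\<Sum>\<alpha>\<in>A'. d \<alpha> * exp (S n \<alpha>))"
      by (intro sum_mono mult_left_mono) (use x(2) dpos in auto)
    ultimately show ?thesis by linarith
  qed
  have "- d \<beta> \<le> (\<Sum>\<alpha>\<in>A'. d \<alpha> * exp (z \<alpha>))" using lim by (rule LIMSEQ_le_const) (use lb in auto)
  then have "0 \<le> exp (y \<beta>) * (d \<beta> + (\<Sum>\<alpha>\<in>A'. d \<alpha> * exp (z \<alpha>)))" by simp
  also have "\<dots> = (\<Sum>\<alpha>\<in>A. exp (y \<alpha>) * d \<alpha>)"
  proof -
    have ey: "exp (y \<alpha>) = exp (y \<beta>) * exp (z \<alpha>)" for \<alpha> unfolding z_def by (simp add: exp_diff)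
    have "(\<Sum>\<alpha>\<in>A'. exp (y \<alpha>) * d \<alpha>) = (\<Sum>\<alpha>\<in>A'. exp (y \<beta>) * (d \<alpha> * exp (z \<alpha>)))"
      by (rule sum.cong[OF refl]) (simp add: z_def exp_diff)
    then show ?thesis unfolding sumA[of "\<lambda>\<alpha>. exp (y \<alpha>) * d \<alpha>"]
      by (simp add: distrib_left sum_distrib_left)
  qed
  finally show ?thesis .
qed


lemma cert:
  assumes X: "X \<noteq> {}" and fA: "finite A" and b: "\<beta> \<in> A"
    and l: "l \<in> Nbeta A \<beta>" and lb: "l \<beta> = -1" and sl: "sig X A l = ereal r"
    and vpos: "\<And>\<alpha>. \<alpha> \<in> A \<Longrightarrow> 0 < v \<alpha>"
    and vd: "\<And>c. c \<in> SAGE_beta X A \<beta> \<Longrightarrow> 0 \<le> (\<Sum>\<alpha>\<in>A. v \<alpha> * c \<alpha>)"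
  shows "0 \<le> (\<Sum>\<alpha>\<in>A. ln (v \<alpha>) * l \<alpha>) + r"
proof -
  define A' where "A' = A - {\<beta>}"
  have fA': "finite A'" using fA A'_def by simp
  have sumA: "(\<Sum>\<alpha>\<in>A. f \<alpha>) = f \<beta> + (\<Sum>\<alpha>\<in>A'. f \<alpha>)" for f :: "'a \<Rightarrow> real"
    unfolding A'_def using sum.remove[OF fA b] by simp
  have bA': "\<beta> \<notin> A'" unfolding A'_def by simp
  define y where "y = (\<lambda>\<alpha>. ln (v \<alpha>))"
  define K where "K = exp (- (r + (\<Sum>\<alpha>\<in>A. y \<alpha> * l \<alpha>)))"
  have l1: "(\<Sum>\<alpha>\<in>A'. l \<alpha>) = 1" using sumA[of l] l lb unfolding Nbeta_def by simp
  have lnn: "0 \<le> l \<alpha>" if "\<alpha> \<in> A'" for \<alpha> using l that unfolding Nbeta_def A'_def by auto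
  have A'ne: "A' \<noteq> {}" using l1 by auto
  have vA': "0 < v \<alpha>" if "\<alpha> \<in> A'" for \<alpha> using vpos that unfolding A'_def by auto
  have vb: "0 < v \<beta>" using vpos b by simp
  define c where "c = (\<lambda>\<alpha>. if \<alpha> \<in> A then (if \<alpha> = \<beta> then - K / v \<beta> else l \<alpha> / v \<alpha>) else 0)"
  have cA': "c \<alpha> = l \<alpha> / v \<alpha>" if "\<alpha> \<in> A'" for \<alpha> using that unfolding c_def A'_def by auto
  have cb: "c \<beta> = - K / v \<beta>" unfolding c_def using b by simp
  have csig: "0 \<le> (\<Sum>\<alpha>\<in>A. c \<alpha> * exp (\<alpha> \<bullet> x))" if x: "x \<in> X" for x
  proof -
    have "exp (\<Sum>\<alpha>\<in>A'. l \<alpha> *\<^sub>R (\<alpha> \<bullet> x - y \<alpha>)) \<le> (\<Sum>\<alpha>\<in>A'. l \<alpha> * exp (\<alpha> \<bullet> x - y \<alpha>))"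
      by (rule convex_on_sum[OF fA' A'ne exp_convex l1]) (use lnn in auto)
    also have "\<dots> = (\<Sum>\<alpha>\<in>A'. c \<alpha> * exp (\<alpha> \<bullet> x))"
      by (rule sum.cong[OF refl]) (simp add: cA' y_def exp_diff vA')
    finally have J: "exp (\<Sum>\<alpha>\<in>A'. l \<alpha> * (\<alpha> \<bullet> x - y \<alpha>)) \<le> (\<Sum>\<alpha>\<in>A'. c \<alpha> * exp (\<alpha> \<bullet> x))" by simp
    have "ereal (- (\<Sum>\<alpha>\<in>A. l \<alpha> * (\<alpha> \<bullet> x))) \<le> ereal r" using sig_ge[OF x, of l A] sl by simp
    then have rb: "- r \<le> (\<Sum>\<alpha>\<in>A. l \<alpha> * (\<alpha> \<bullet> x))" by simp
    have e1: "(\<Sum>\<alpha>\<in>A'. l \<alpha> * (\<alpha> \<bullet> x - y \<alpha>)) = (\<Sum>\<alpha>\<in>A'. l \<alpha> * (\<alpha> \<bullet> x)) - (\<Sum>\<alpha>\<in>A'. l \<alpha> * y \<alpha>)"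
      by (simp add: right_diff_distrib sum_subtractf)
    have e2: "(\<Sum>\<alpha>\<in>A. l \<alpha> * (\<alpha> \<bullet> x)) = - (\<beta> \<bullet> x) + (\<Sum>\<alpha>\<in>A'. l \<alpha> * (\<alpha> \<bullet> x))"
      using sumA[of "\<lambda>\<alpha>. l \<alpha> * (\<alpha> \<bullet> x)"] lb by simp
    have e3: "(\<Sum>\<alpha>\<in>A. y \<alpha> * l \<alpha>) = - y \<beta> + (\<Sum>\<alpha>\<in>A'. l \<alpha> * y \<alpha>)"
      using sumA[of "\<lambda>\<alpha>. y \<alpha> * l \<alpha>"] lb by (simp add: mult.commute)
    have "- (r + (\<Sum>\<alpha>\<in>A. y \<alpha> * l \<alpha>)) + (\<beta> \<bullet> x - y \<beta>) \<le> (\<Sum>\<alpha>\<in>A'. l \<alpha> * (\<alpha> \<bullet> x - y \<alpha>))"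
      using rb e1 e2 e3 by linarith
    then have "exp (- (r + (\<Sum>\<alpha>\<in>A. y \<alpha> * l \<alpha>)) + (\<beta> \<bullet> x - y \<beta>)) \<le> (\<Sum>\<alpha>\<in>A'. c \<alpha> * exp (\<alpha> \<bullet> x))"
      using J by (meson exp_le_cancel_iff order_trans)
    moreover have "exp (- (r + (\<Sum>\<alpha>\<in>A. y \<alpha> * l \<alpha>)) + (\<beta> \<bullet> x - y \<beta>)) = K / v \<beta> * exp (\<beta> \<bullet> x)"
      unfolding K_def by (simp add: exp_add exp_diff y_def vb)
    ultimately have "0 \<le> - K / v \<beta> * exp (\<beta> \<bullet> x) + (\<Sum>\<alpha>\<in>A'. c \<alpha> * exp (\<alpha> \<bullet> x))" by simp
    then show ?thesis unfolding sumA[of "\<lambda>\<alpha>. c \<alpha> * exp (\<alpha> \<bullet> x)"] cb .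
  qed
  have cS: "c \<in> SAGE_beta X A \<beta>"
    unfolding SAGE_beta_def signomial_def
  proof (intro CollectI conjI ballI impI)
    show "c \<in> RA A" unfolding RA_def c_def by auto
    show "\<And>x. x \<in> X \<Longrightarrow> 0 \<le> (\<Sum>\<alpha>\<in>A. c \<alpha> * exp (\<alpha> \<bullet> x))" by (rule csig)
    fix \<alpha> assume "\<alpha> \<in> A" "\<alpha> \<noteq> \<beta>"
    then show "0 \<le> c \<alpha>" using cA'[of \<alpha>] lnn[of \<alpha>] vA'[of \<alpha>] unfolding A'_def by auto
  qed
  have "(\<Sum>\<alpha>\<in>A. v \<alpha> * c \<alpha>) = - K + (\<Sum>\<alpha>\<in>A'. l \<alpha>)"
  proof -
    have "(\<Sum>\<alpha>\<in>A'. v \<alpha> * c \<alpha>) = (\<Sum>\<alpha>\<in>A'. l \<alpha>)"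
      by (rule sum.cong[OF refl]) (use cA' vA' in \<open>fastforce\<close>)
    then show ?thesis unfolding sumA[of "\<lambda>\<alpha>. v \<alpha> * c \<alpha>"] cb using vb by simp
  qed
  with vd[OF cS] l1 have "K \<le> 1" by simp
  then have "- (r + (\<Sum>\<alpha>\<in>A. y \<alpha> * l \<alpha>)) \<le> 0" unfolding K_def by simp
  then show ?thesis unfolding y_def by (simp add: add.commute)
qed


lemma phi_in_graph: "l \<in> Lambda_X X A \<Longrightarrow> (l, real_of_ereal (sig X A l)) \<in> circuit_graph X A"
  unfolding circuit_graph_def
  by (rule CollectI, rule exI[of _ "{l}"], rule exI[of _ "\<lambda>_. 1"], rule exI[of _ 0])
     (simp add: phi_def sig_def)

lemma G_dual_circuit:
  assumes "(y, 1) \<in> circuit_graph_dual X A" "l \<in> Lambda_X X A"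
  shows "0 \<le> psi X A y l"
  using assms(1) phi_in_graph[OF assms(2)] unfolding circuit_graph_dual_def psi_def by auto

lemma G_dual_intro:
  assumes y: "y \<in> RA A" and H: "\<And>l. l \<in> Lambda_X X A \<Longrightarrow> 0 \<le> psi X A y l"
  shows "(y, 1) \<in> circuit_graph_dual X A"
  unfolding circuit_graph_dual_def
proof (clarsimp simp: y)
  fix u r assume "(u, r) \<in> circuit_graph X A"
  then obtain F c t where F: "finite F" "F \<subseteq> Lambda_X X A" "\<forall>l\<in>F. 0 \<le> c l" "0 \<le> t"
    and ur: "u = (\<lambda>\<alpha>. \<Sum>l\<in>F. c l * fst (phi X A l) \<alpha>)" "r = (\<Sum>l\<in>F. c l * snd (phi X A l)) + t"
    unfolding circuit_graph_def by auto
  have "(\<Sum>\<alpha>\<in>A. y \<alpha> * u \<alpha>) + r = (\<Sum>l\<in>F. c l * psi X A y l) + t"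
  proof -
    have "(\<Sum>\<alpha>\<in>A. y \<alpha> * u \<alpha>) = (\<Sum>l\<in>F. c l * (\<Sum>\<alpha>\<in>A. y \<alpha> * l \<alpha>))"
    proof -
      have "(\<Sum>\<alpha>\<in>A. y \<alpha> * u \<alpha>) = (\<Sum>\<alpha>\<in>A. \<Sum>l\<in>F. c l * (y \<alpha> * l \<alpha>))"
        unfolding ur(1) by (simp add: phi_def sum_distrib_left mult_ac)
      also have "\<dots> = (\<Sum>l\<in>F. \<Sum>\<alpha>\<in>A. c l * (y \<alpha> * l \<alpha>))" by (rule sum.swap)
      also have "\<dots> = (\<Sum>l\<in>F. c l * (\<Sum>\<alpha>\<in>A. y \<alpha> * l \<alpha>))" by (simp add: sum_distrib_left)
      finally show ?thesis .
    qed
    then show ?thesis unfolding ur(2) psi_def by (simp add: phi_def sig_def distrib_left sum.distrib)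
  qed
  moreover have "0 \<le> (\<Sum>l\<in>F. c l * psi X A y l)"
    using F H by (intro sum_nonneg mult_nonneg_nonneg) auto
  ultimately show "0 \<le> (\<Sum>\<alpha>\<in>A. y \<alpha> * u \<alpha>) + r" using F(4) by simp
qed

lemma zero_SAGE_beta: "(\<lambda>_. 0) \<in> SAGE_beta X A \<beta>"
  unfolding SAGE_beta_def RA_def signomial_def by simp

lemma SAGE_beta_SAGE:
  assumes "c \<in> SAGE_beta X A \<beta>" "\<beta> \<in> A" "finite A"
  shows "c \<in> SAGE X A"
  unfolding SAGE_def
proof (intro CollectI exI[of _ "\<lambda>\<gamma>. if \<gamma> = \<beta> then c else (\<lambda>_. 0)"] conjI ballI)
  fix \<gamma> assume "\<gamma> \<in> A"
  show "(if \<gamma> = \<beta> then c else (\<lambda>_. 0)) \<in> SAGE_beta X A \<gamma>"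
    using assms(1) zero_SAGE_beta by (auto simp: SAGE_beta_def)
next
  show "c = (\<lambda>\<alpha>. \<Sum>\<gamma>\<in>A. (if \<gamma> = \<beta> then c else (\<lambda>_. 0)) \<alpha>)"
  proof
    fix \<alpha>
    have "(\<Sum>\<gamma>\<in>A. (if \<gamma> = \<beta> then c else (\<lambda>_. 0)) \<alpha>) = (\<Sum>\<gamma>\<in>A. if \<gamma> = \<beta> then c \<alpha> else 0)"
      by (rule sum.cong) auto
    also have "\<dots> = c \<alpha>" using assms(2,3) by (simp add: sum.delta)
    finally show "c \<alpha> = (\<Sum>\<gamma>\<in>A. (if \<gamma> = \<beta> then c else (\<lambda>_. 0)) \<alpha>)" by simp
  qed
qed

lemma SAGE_sig:
  assumes "c \<in> SAGE X A" "x \<in> X"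
  shows "0 \<le> (\<Sum>\<alpha>\<in>A. c \<alpha> * exp (\<alpha> \<bullet> x))"
proof -
  obtain f where f: "\<forall>\<beta>\<in>A. f \<beta> \<in> SAGE_beta X A \<beta>" "c = (\<lambda>\<alpha>. \<Sum>\<beta>\<in>A. f \<beta> \<alpha>)"
    using assms(1) unfolding SAGE_def by auto
  have "(\<Sum>\<alpha>\<in>A. c \<alpha> * exp (\<alpha> \<bullet> x)) = (\<Sum>\<beta>\<in>A. \<Sum>\<alpha>\<in>A. f \<beta> \<alpha> * exp (\<alpha> \<bullet> x))"
  proof -
    have "(\<Sum>\<alpha>\<in>A. c \<alpha> * exp (\<alpha> \<bullet> x)) = (\<Sum>\<alpha>\<in>A. \<Sum>\<beta>\<in>A. f \<beta> \<alpha> * exp (\<alpha> \<bullet> x))"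
      unfolding f(2) by (simp add: sum_distrib_right)
    also have "\<dots> = (\<Sum>\<beta>\<in>A. \<Sum>\<alpha>\<in>A. f \<beta> \<alpha> * exp (\<alpha> \<bullet> x))" by (rule sum.swap)
    finally show ?thesis .
  qed
  also have "0 \<le> \<dots>"
  proof (rule sum_nonneg)
    fix \<beta> assume "\<beta> \<in> A"
    then show "0 \<le> (\<Sum>\<alpha>\<in>A. f \<beta> \<alpha> * exp (\<alpha> \<bullet> x))"
      using f(1) assms(2) unfolding SAGE_beta_def signomial_def by blast
  qed
  finally show ?thesis by simp
qed

lemma SAGE_dual_closed: "closed (SAGE_dual X A)"
proof -
  have eq: "SAGE_dual X A = (\<Inter>\<alpha>\<in>-A. {v. v \<alpha> = 0}) \<inter> (\<Inter>c\<in>SAGE X A. {v. 0 \<le> (\<Sum>\<alpha>\<in>A. v \<alpha> * c \<alpha>)})"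
    unfolding SAGE_dual_def RA_def by auto
  have c1: "closed {v::'a \<Rightarrow> real. v \<alpha> = 0}" for \<alpha>
    by (rule closed_Collect_eq) (auto intro: continuous_on_product_coordinates continuous_on_const)
  have c2: "closed {v::'a \<Rightarrow> real. 0 \<le> (\<Sum>\<alpha>\<in>A. v \<alpha> * c \<alpha>)}" for c
    by (rule closed_Collect_le) (auto intro!: continuous_on_sum continuous_on_mult_right continuous_on_product_coordinates continuous_on_const)
  show ?thesis unfolding eq using c1 c2 by (intro closed_Int closed_INT) auto
qed


theorem theorem5p4:
  fixes X :: "'a::euclidean_space set" and A :: "'a set"
  assumes "X \<noteq> {}" and "closed X" and "convex X"
    and "finite A" and "A \<noteq> {}"
    and "\<forall>c::'a \<Rightarrow> real. (\<forall>x\<in>X. (\<Sum>\<alpha>\<in>A. c \<alpha> * exp (\<alpha> \<bullet> x)) = 0) \<longrightarrow> (\<forall>\<alpha>\<in>A. c \<alpha> = 0)"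
  shows "SAGE_dual X A =
         closure {exp_vec A y | y. y \<in> RA A \<and> (y, 1) \<in> circuit_graph_dual X A}"
proof -
  note X = assms(1) and cX = assms(3) and fA = assms(4)
  define S where "S = {exp_vec A y | y. y \<in> RA A \<and> (y, 1) \<in> circuit_graph_dual X A}"
  have SD: "S \<subseteq> SAGE_dual X A"
  proof
    fix u assume "u \<in> S"
    then obtain y where y: "y \<in> RA A" "(y, 1) \<in> circuit_graph_dual X A" "u = exp_vec A y"
      unfolding S_def by blast
    have uRA: "u \<in> RA A" unfolding y(3) RA_def exp_vec_def by auto
    have "0 \<le> (\<Sum>\<alpha>\<in>A. u \<alpha> * c \<alpha>)" if c: "c \<in> SAGE X A" for c
    proof -
      obtain f where f: "\<forall>\<beta>\<in>A. f \<beta> \<in> SAGE_beta X A \<beta>" "c = (\<lambda>\<alpha>. \<Sum>\<beta>\<in>A. f \<beta> \<alpha>)"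
        using c unfolding SAGE_def by auto
      have "(\<Sum>\<alpha>\<in>A. u \<alpha> * c \<alpha>) = (\<Sum>\<alpha>\<in>A. \<Sum>\<beta>\<in>A. exp (y \<alpha>) * f \<beta> \<alpha>)"
        unfolding f(2) y(3) exp_vec_def by (simp add: sum_distrib_left)
      also have "\<dots> = (\<Sum>\<beta>\<in>A. \<Sum>\<alpha>\<in>A. exp (y \<alpha>) * f \<beta> \<alpha>)" by (rule sum.swap)
      also have "0 \<le> \<dots>"
      proof (rule sum_nonneg)
        fix \<beta> assume b: "\<beta> \<in> A"
        show "0 \<le> (\<Sum>\<alpha>\<in>A. exp (y \<alpha>) * f \<beta> \<alpha>)"
        proof (rule age_dual[OF X cX fA b])
          show "f \<beta> \<in> SAGE_beta X A \<beta>" using f(1) b by blast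
          fix \<nu> assume "\<nu> \<in> Nbeta A \<beta>"
          then show "0 \<le> ereal (\<Sum>\<alpha>\<in>A. y \<alpha> * \<nu> \<alpha>) + sig X A \<nu>"
          proof (rule circuit_key[OF X fA b, rotated])
            fix l assume "X_circuit X A \<beta> l" "l \<beta> = -1"
            then have "l \<in> Lambda_X X A" unfolding Lambda_X_def using b by blast
            then show "0 \<le> psi X A y l" by (rule G_dual_circuit[OF y(2)])
          qed
        qed
      qed
      finally show ?thesis .
    qed
    then show "u \<in> SAGE_dual X A" unfolding SAGE_dual_def using uRA by blast
  qed
  have DS: "SAGE_dual X A \<subseteq> closure S"
  proof
    fix v assume v: "v \<in> SAGE_dual X A"
    have vRA: "v \<in> RA A" and vd: "\<And>c. c \<in> SAGE X A \<Longrightarrow> 0 \<le> (\<Sum>\<alpha>\<in>A. v \<alpha> * c \<alpha>)"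
      using v unfolding SAGE_dual_def by auto
    have vnn: "0 \<le> v \<alpha>" if a: "\<alpha> \<in> A" for \<alpha>
    proof -
      define c where "c = (\<lambda>\<gamma>. if \<gamma> = \<alpha> then (1::real) else 0)"
      have "c \<in> SAGE_beta X A \<alpha>" unfolding SAGE_beta_def RA_def signomial_def c_def
        using a fA by (auto intro!: sum_nonneg)
      then have "c \<in> SAGE X A" using SAGE_beta_SAGE a fA by blast
      moreover have "(\<Sum>\<gamma>\<in>A. v \<gamma> * c \<gamma>) = (\<Sum>\<gamma>\<in>A. if \<gamma> = \<alpha> then v \<alpha> else 0)"
        unfolding c_def by (rule sum.cong) auto
      moreover have "(\<Sum>\<gamma>\<in>A. if \<gamma> = \<alpha> then v \<alpha> else 0) = v \<alpha>" using a fA by simp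
      ultimately show ?thesis using vd by metis
    qed
    obtain x0 where x0: "x0 \<in> X" using X by auto
    define w where "w = (\<lambda>\<alpha>. if \<alpha> \<in> A then exp (\<alpha> \<bullet> x0) else 0)"
    define h where "h = (\<lambda>t::real. \<lambda>\<alpha>. v \<alpha> + t * w \<alpha>)"
    have hS: "h t \<in> S" if t: "0 < t" for t
    proof -
      have hpos: "0 < h t \<alpha>" if "\<alpha> \<in> A" for \<alpha>
        unfolding h_def w_def using vnn[OF that] t that by (simp add: add_nonneg_pos)
      define y where "y = (\<lambda>\<alpha>. if \<alpha> \<in> A then ln (h t \<alpha>) else 0)"
      have yRA: "y \<in> RA A" unfolding y_def RA_def by auto
      have ey: "exp_vec A y = h t"
      proof
        fix \<alpha> show "exp_vec A y \<alpha> = h t \<alpha>"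
        proof (cases "\<alpha> \<in> A")
          case True then show ?thesis unfolding exp_vec_def y_def using hpos[OF True] by simp
        next
          case False then show ?thesis unfolding exp_vec_def h_def w_def using vRA by (simp add: RA_def)
        qed
      qed
      have "(y, 1) \<in> circuit_graph_dual X A"
      proof (rule G_dual_intro[OF yRA])
        fix l assume "l \<in> Lambda_X X A"
        then obtain \<beta> where b: "\<beta> \<in> A" and lc: "X_circuit X A \<beta> l" and lb: "l \<beta> = -1"
          unfolding Lambda_X_def by blast
        have lN: "l \<in> Nbeta A \<beta>" and lf: "sig X A l < \<infinity>" using lc unfolding X_circuit_def sig_def by auto
        have sl: "sig X A l = ereal (real_of_ereal (sig X A l))" using sig_finite[OF X lf] .
        have "0 \<le> (\<Sum>\<alpha>\<in>A. ln (h t \<alpha>) * l \<alpha>) + real_of_ereal (sig X A l)"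
        proof (rule cert[OF X fA b lN lb sl hpos])
          fix c assume c: "c \<in> SAGE_beta X A \<beta>"
          have "(\<Sum>\<alpha>\<in>A. h t \<alpha> * c \<alpha>) = (\<Sum>\<alpha>\<in>A. v \<alpha> * c \<alpha>) + t * (\<Sum>\<alpha>\<in>A. c \<alpha> * exp (\<alpha> \<bullet> x0))"
            unfolding h_def w_def by (simp add: algebra_simps sum.distrib sum_distrib_left)
          moreover have "0 \<le> (\<Sum>\<alpha>\<in>A. v \<alpha> * c \<alpha>)" using vd SAGE_beta_SAGE[OF c b fA] by blast
          moreover have "0 \<le> (\<Sum>\<alpha>\<in>A. c \<alpha> * exp (\<alpha> \<bullet> x0))" using c x0 unfolding SAGE_beta_def signomial_def by blast
          ultimately show "0 \<le> (\<Sum>\<alpha>\<in>A. h t \<alpha> * c \<alpha>)" using t by simp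
        qed
        moreover have "(\<Sum>\<alpha>\<in>A. ln (h t \<alpha>) * l \<alpha>) = (\<Sum>\<alpha>\<in>A. y \<alpha> * l \<alpha>)"
          unfolding y_def by (rule sum.cong) auto
        ultimately show "0 \<le> psi X A y l" unfolding psi_def by simp
      qed
      then show ?thesis unfolding S_def using yRA ey by (metis (mono_tags, lifting) mem_Collect_eq)
    qed
    have hc: "continuous_on UNIV h" unfolding h_def
      by (intro continuous_on_coordinatewise_then_product continuous_intros)
    have "(\<lambda>n. h (inverse (real (Suc n)))) \<longlonglongrightarrow> h 0"
      by (rule continuous_on_tendsto_compose[OF hc LIMSEQ_inverse_real_of_nat]) auto
    moreover have "h 0 = v" unfolding h_def by simp
    ultimately have lim: "(\<lambda>n. h (inverse (real (Suc n)))) \<longlonglongrightarrow> v" by simp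
    show "v \<in> closure S"
    proof (rule Lim_in_closed_set[OF closed_closure _ _ lim])
      show "\<forall>\<^sub>F n in sequentially. h (inverse (real (Suc n))) \<in> closure S"
      proof (intro always_eventually allI)
        fix n :: nat
        have "h (inverse (real (Suc n))) \<in> S" by (rule hS) simp
        then show "h (inverse (real (Suc n))) \<in> closure S" using closure_subset by blast
      qed
    qed simp
  qed
  have "closure S \<subseteq> SAGE_dual X A" by (rule closure_minimal[OF SD SAGE_dual_closed])
  with DS show ?thesis unfolding S_def by blast
qed

end
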